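(* Let $X_1,\ldots,X_n$ be $p$-dimensional random vectors satisfying the assumption below for some $w,u>0$, with $n\geq\log(ep)$. Let $\mathbb{E}_0$ denote expectation when $\mathrm{Cov}(X_i)$ is constant in $i$, and $\mathbb{E}_1$ expectation when $\mathrm{Cov}(X_i)=\Sigma_1$ for $i\leq t_0$ and $\mathrm{Cov}(X_i)=\Sigma_2$ for $i>t_0$, for some $t_0\in[n-1]$ and positive definite $\Sigma_1,\Sigma_2$. Given $\delta\in(0,1)$, there exists $\lambda_0>0$ depending only on $\delta,w,u$ such that for every $\lambda\geq\lambda_0$ there is a constant $C>0$ depending only on $\lambda,\delta,w,u$ such that $$\mathbb{E}_0\widehat\psi_{\mathrm{adaptive},\lambda}(X)+\mathbb{E}_1(1-\widehat\psi_{\mathrm{adaptive},\lambda}(X))\leq\delta$$ as long as, for some $s\in[p]$, $$\min(t_0,n-t_0)\Big(\frac{\lambda^s_{\max}(\Sigma_1-\Sigma_2)}{\lambda^s_{\max}(\Sigma_1)\vee\lambda^s_{\max}(\Sigma_2)}\Big)^2\geq Cs^2\{\log(ep)\vee\log\log(8n)\}.$$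
   Context: Assumption (with $w,u>0$): (A) the $X_i$ are independent and mean zero; (B) for all $i\in[n]$ and $v\in S^{p-1}$, $v^\top X_i/\{\mathbb{E}(v^\top X_i)^2\}^{1/2}$ has a continuous density bounded above by $w$; (C) for all $i$ and $v\in S^{p-1}$, $\|v^\top X_i\|_{\Psi_2}^2\leq u\,\mathbb{E}(v^\top X_i)^2$, where $\|Y\|_{\Psi_2}=\inf\{t>0:\mathbb{E}\exp(Y^2/t^2)\leq2\}$. Notation: $S^{p-1}_s=\{v\in S^{p-1}:\|v\|_0\leq s\}$, $\lambda^s_{\max}(A)=\sup_{v\in S^{p-1}_s}|v^\top Av|$ for symmetric $A$. For symmetric $A\in\mathbb{R}^{p\times p}$, $\widehat\lambda^s_{\max}(A)=\sup_{Z\in N(p,s)}|\mathrm{Tr}(AZ)|$, where $N(p,s)=\{Z\in\mathbb{R}^{p\times p}: Z\succcurlyeq0,\ \mathrm{Tr}(Z)=1,\ \|Z\|_1\leq s\}$ and $\|Z\|_1$ is the sum of absolute values of the entries. $X=(X_1^\top,\ldots,X_n^\top)^\top$; $\widehat\Sigma_{1,t}=t^{-1}\sum_{i=1}^tX_iX_i^\top$, $\widehat\Sigma_{2,t}=t^{-1}\sum_{i=1}^tX_{n-i+1}X_{n-i+1}^\top$; $\widehat S_{t,s}=\widehat\lambda^s_{\max}(\widehat\Sigma_{1,t}-\widehat\Sigma_{2,t})$; $\widehat\sigma^2_{\mathrm{con}}=\widehat\lambda^1_{\max}(\widehat\Sigma_{1,\lceil\log(ep)\rceil})\wedge\widehat\lambda^1_{\max}(\widehat\Sigma_{2,\lceil\log(ep)\rceil})$;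 with $g=\log(ep)\vee\log\log(8n)$, $h(p,n,s,t)=s\{\sqrt{g/t}\vee g/t\}$; $\mathcal{T}=\{2^0,\ldots,2^{\lfloor\log_2(n/2)\rfloor}\}$, $\mathcal{S}=\{2^0,\ldots,2^{\lfloor\log_2 p\rfloor}\}$; and $$\widehat\psi_{\mathrm{adaptive},\lambda}(X)=\max_{t\in\mathcal{T}}\max_{s\in\mathcal{S}}\mathbb{1}\{\widehat S_{t,s}>\lambda\widehat\sigma^2_{\mathrm{con}}h(p,n,s,t)\}.$$ *)

theory Defs
  imports "HOL-Probability.Probability"
begin

text \<open>A p-vector is a
function nat => real whose relevant coordinates are 0..p-1; a p x p matrix is a function
nat => nat => real with relevant entries (j,k), j,k < p. A data set X = (X_1,...,X_n) is a
function nat => nat => real, where X i is the i-th observation (i in 1..n) and X i j its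
j-th coordinate.\<close>

type_synonym vec = "nat \<Rightarrow> real"
type_synonym mat = "nat \<Rightarrow> nat \<Rightarrow> real"
type_synonym data = "nat \<Rightarrow> nat \<Rightarrow> real"

definition inner_p :: "nat \<Rightarrow> vec \<Rightarrow> vec \<Rightarrow> real" where
  "inner_p p v x = (\<Sum>j<p. v j * x j)"

definition quad_form :: "nat \<Rightarrow> mat \<Rightarrow> vec \<Rightarrow> real" where
  "quad_form p A v = (\<Sum>j<p. \<Sum>k<p. v j * A j k * v k)"

definition unit_sphere :: "nat \<Rightarrow> vec set" where
  "unit_sphere p = {v. (\<forall>j\<ge>p. v j = 0) \<and> (\<Sum>j<p. (v j)\<^sup>2) = 1}"

definition sparse_sphere :: "nat \<Rightarrow> nat \<Rightarrow> vec set" where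
  "sparse_sphere p s = {v \<in> unit_sphere p. card {j. j < p \<and> v j \<noteq> 0} \<le> s}"

definition lam_max_s :: "nat \<Rightarrow> nat \<Rightarrow> mat \<Rightarrow> real" where
  "lam_max_s p s A = (SUP v \<in> sparse_sphere p s. \<bar>quad_form p A v\<bar>)"

definition symmetric_p :: "nat \<Rightarrow> mat \<Rightarrow> bool" where
  "symmetric_p p A \<longleftrightarrow> (\<forall>j<p. \<forall>k<p. A j k = A k j)"

definition psd_p :: "nat \<Rightarrow> mat \<Rightarrow> bool" where
  "psd_p p A \<longleftrightarrow> symmetric_p p A \<and> (\<forall>v. 0 \<le> quad_form p A v)"

definition pos_def_p :: "nat \<Rightarrow> mat \<Rightarrow> bool" where
  "pos_def_p p A \<longleftrightarrow> symmetric_p p A \<and>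
     (\<forall>v. (\<exists>j<p. v j \<noteq> 0) \<longrightarrow> 0 < quad_form p A v)"

definition trace_p :: "nat \<Rightarrow> mat \<Rightarrow> real" where
  "trace_p p A = (\<Sum>j<p. A j j)"

definition mat_mult_p :: "nat \<Rightarrow> mat \<Rightarrow> mat \<Rightarrow> mat" where
  "mat_mult_p p A B = (\<lambda>j k. \<Sum>l<p. A j l * B l k)"

definition entry_l1_p :: "nat \<Rightarrow> mat \<Rightarrow> real" where
  "entry_l1_p p Z = (\<Sum>j<p. \<Sum>k<p. \<bar>Z j k\<bar>)"

definition N_set :: "nat \<Rightarrow> real \<Rightarrow> mat set" where
  "N_set p s = {Z. psd_p p Z \<and> trace_p p Z = 1 \<and> entry_l1_p p Z \<le> s}"

definition lam_hat_s :: "nat \<Rightarrow> nat \<Rightarrow> mat \<Rightarrow> real" where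
  "lam_hat_s p s A = (SUP Z \<in> N_set p (real s). \<bar>trace_p p (mat_mult_p p A Z)\<bar>)"

definition Sigma_hat_1 :: "data \<Rightarrow> nat \<Rightarrow> mat" where
  "Sigma_hat_1 X t = (\<lambda>j k. (1 / real t) * (\<Sum>i\<in>{1..t}. X i j * X i k))"

definition Sigma_hat_2 :: "nat \<Rightarrow> data \<Rightarrow> nat \<Rightarrow> mat" where
  "Sigma_hat_2 n X t = (\<lambda>j k. (1 / real t) * (\<Sum>i\<in>{1..t}. X (n - i + 1) j * X (n - i + 1) k))"

definition S_hat :: "nat \<Rightarrow> nat \<Rightarrow> data \<Rightarrow> nat \<Rightarrow> nat \<Rightarrow> real" where
  "S_hat n p X t s = lam_hat_s p s (\<lambda>j k. Sigma_hat_1 X t j k - Sigma_hat_2 n X t j k)"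

definition sigma2_con :: "nat \<Rightarrow> nat \<Rightarrow> data \<Rightarrow> real" where
  "sigma2_con n p X =
     min (lam_hat_s p 1 (Sigma_hat_1 X (nat \<lceil>ln (exp 1 * real p)\<rceil>)))
         (lam_hat_s p 1 (Sigma_hat_2 n X (nat \<lceil>ln (exp 1 * real p)\<rceil>)))"

definition g_fun :: "nat \<Rightarrow> nat \<Rightarrow> real" where
  "g_fun p n = max (ln (exp 1 * real p)) (ln (ln (8 * real n)))"

definition h_fun :: "nat \<Rightarrow> nat \<Rightarrow> nat \<Rightarrow> nat \<Rightarrow> real" where
  "h_fun p n s t = real s * max (sqrt (g_fun p n / real t)) (g_fun p n / real t)"

definition T_grid :: "nat \<Rightarrow> nat set" where
  "T_grid n = {2 ^ k | k::nat. int k \<le> \<lfloor>log 2 (real n / 2)\<rfloor>}"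

definition S_grid :: "nat \<Rightarrow> nat set" where
  "S_grid p = {2 ^ k | k::nat. int k \<le> \<lfloor>log 2 (real p)\<rfloor>}"

definition psi_adaptive :: "nat \<Rightarrow> nat \<Rightarrow> real \<Rightarrow> data \<Rightarrow> real" where
  "psi_adaptive n p lam X =
     (if \<exists>t\<in>T_grid n. \<exists>s\<in>S_grid p.
           S_hat n p X t s > lam * sigma2_con n p X * h_fun p n s t
      then 1 else 0)"

text \<open>Orlicz psi_2 norm (extended-real valued; infinity if the defining set is empty)\<close>
definition psi2_norm :: "'a measure \<Rightarrow> ('a \<Rightarrow> real) \<Rightarrow> ereal" where
  "psi2_norm M Y = Inf (ereal ` {t. 0 < t \<and> (\<integral>\<^sup>+ x. ennreal (exp ((Y x)\<^sup>2 / t\<^sup>2)) \<partial>M) \<le> 2})"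

definition assumption_ABC :: "nat \<Rightarrow> nat \<Rightarrow> real \<Rightarrow> real \<Rightarrow> data measure \<Rightarrow> bool" where
  "assumption_ABC n p w u P \<longleftrightarrow>
     prob_space P \<and> sets P = sets borel \<and>
     \<comment> \<open>(A) independence and mean zero\<close>
     prob_space.indep_vars P (\<lambda>_. borel) (\<lambda>i X. X i) {1..n} \<and>
     (\<forall>i\<in>{1..n}. \<forall>j<p. integrable P (\<lambda>X. X i j) \<and> (\<integral>X. X i j \<partial>P) = 0) \<and>
     (\<forall>i\<in>{1..n}. \<forall>v\<in>unit_sphere p.
        integrable P (\<lambda>X. (inner_p p v (X i))\<^sup>2) \<and>
        \<comment> \<open>(B) continuous density bounded by w\<close>
        (\<exists>f::real \<Rightarrow> real. continuous_on UNIV f \<and> (\<forall>y. 0 \<le> f y \<and> f y \<le> w) \<and>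
           distributed P lborel
             (\<lambda>X. inner_p p v (X i) / sqrt (\<integral>Y. (inner_p p v (Y i))\<^sup>2 \<partial>P))
             (\<lambda>y. ennreal (f y))) \<and>
        \<comment> \<open>(C) sub-Gaussianity\<close>
        (psi2_norm P (\<lambda>X. inner_p p v (X i)))\<^sup>2
           \<le> ereal (u * (\<integral>X. (inner_p p v (X i))\<^sup>2 \<partial>P)))"

definition cov_mat :: "data measure \<Rightarrow> nat \<Rightarrow> mat" where
  "cov_mat P i = (\<lambda>j k. \<integral>X. (X i j - (\<integral>Y. Y i j \<partial>P)) * (X i k - (\<integral>Y. Y i k \<partial>P)) \<partial>P)"

definition null_model :: "nat \<Rightarrow> nat \<Rightarrow> real \<Rightarrow> real \<Rightarrow> data measure \<Rightarrow> bool" where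
  "null_model n p w u P \<longleftrightarrow> assumption_ABC n p w u P \<and>
     (\<exists>\<Sigma>. \<forall>i\<in>{1..n}. \<forall>j<p. \<forall>k<p. cov_mat P i j k = \<Sigma> j k)"

definition alt_model :: "nat \<Rightarrow> nat \<Rightarrow> real \<Rightarrow> real \<Rightarrow> nat \<Rightarrow> mat \<Rightarrow> mat \<Rightarrow> data measure \<Rightarrow> bool" where
  "alt_model n p w u t0 \<Sigma>1 \<Sigma>2 P \<longleftrightarrow> assumption_ABC n p w u P \<and>
     t0 \<in> {1..n - 1} \<and> pos_def_p p \<Sigma>1 \<and> pos_def_p p \<Sigma>2 \<and>
     (\<forall>i\<in>{1..n}. \<forall>j<p. \<forall>k<p.
        cov_mat P i j k = (if i \<le> t0 then \<Sigma>1 j k else \<Sigma>2 j k))"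

end

theory Submission
  imports Defs
begin

definition outer :: "vec \<Rightarrow> mat" where "outer v = (\<lambda>j k. v j * v k)"
definition evec :: "nat \<Rightarrow> vec" where "evec j = (\<lambda>l. if l = j then 1 else 0)"

lemma quad_form_outer: "quad_form p (outer v) x = (inner_p p v x)\<^sup>2"
  by (simp add: quad_form_def outer_def inner_p_def power2_eq_square sum_product
      sum_distrib_left sum_distrib_right mult_ac)

lemma trace_outer: "trace_p p (mat_mult_p p A (outer v)) = quad_form p A v"
  unfolding trace_p_def mat_mult_p_def quad_form_def outer_def
  by (intro sum.cong refl) (simp add: mult_ac)

lemma sum_delta_lt: "j < (p::nat) \<Longrightarrow> (\<Sum>l<p. if l = j then (f l::real) else 0) = f j"
  by (subst sum.delta[where S="{..<p}" and a=j and b=f]) auto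

lemma inner_evec: "j < p \<Longrightarrow> inner_p p (evec j) x = x j"
proof -
  assume "j < p"
  have e: "(\<lambda>l. evec j l * x l) = (\<lambda>l. if l = j then x l else 0)" by (auto simp: evec_def)
  show ?thesis unfolding inner_p_def e using \<open>j < p\<close> by (rule sum_delta_lt)
qed

lemma quad_form_evec: "j < p \<Longrightarrow> quad_form p A (evec j) = A j j"
proof -
  assume jp: "j < p"
  have e1: "(\<lambda>l. evec j k * A k l * evec j l) = (\<lambda>l. if l = j then evec j k * A k j else 0)" for k
    by (auto simp: evec_def)
  have e2: "(\<lambda>k. evec j k * A k j) = (\<lambda>k. if k = j then A j j else 0)"
    by (auto simp: evec_def)
  have "quad_form p A (evec j) = (\<Sum>k<p. evec j k * A k j)"
    unfolding quad_form_def e1 using jp by (intro sum.cong refl) (rule sum_delta_lt)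
  also have "\<dots> = A j j" unfolding e2 using jp sum_delta_lt[of j p "\<lambda>_. A j j"] by simp
  finally show ?thesis .
qed

lemma evec_unit: "j < p \<Longrightarrow> evec j \<in> unit_sphere p"
proof -
  assume "j < p"
  have e: "(\<lambda>l. (evec j l)\<^sup>2) = (\<lambda>l. if l = j then 1 else 0)" by (auto simp: evec_def)
  have "(\<Sum>l<p. (evec j l)\<^sup>2) = 1" unfolding e using \<open>j < p\<close> sum_delta_lt[of j p "\<lambda>_. 1"] by simp
  then show ?thesis using \<open>j < p\<close> by (simp add: unit_sphere_def evec_def)
qed

lemma evec_sparse: "j < p \<Longrightarrow> 1 \<le> s \<Longrightarrow> evec j \<in> sparse_sphere p s"
proof -
  assume a: "j < p" "1 \<le> s"
  have "{l. l < p \<and> evec j l \<noteq> 0} = {j}" using a by (auto simp: evec_def)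
  then show ?thesis using a evec_unit by (simp add: sparse_sphere_def)
qed

lemma outer_psd: "psd_p p (outer v)"
  by (simp add: psd_p_def symmetric_p_def outer_def quad_form_outer[unfolded outer_def]
      mult.commute)

lemma outer_trace_unit: "v \<in> unit_sphere p \<Longrightarrow> trace_p p (outer v) = 1"
  by (simp add: unit_sphere_def trace_p_def outer_def power2_eq_square)

lemma l1_outer: "entry_l1_p p (outer v) = (\<Sum>j<p. \<bar>v j\<bar>)\<^sup>2"
  by (simp add: entry_l1_p_def outer_def abs_mult power2_eq_square sum_product)

lemma l1_outer_sparse:
  assumes "v \<in> sparse_sphere p s" shows "entry_l1_p p (outer v) \<le> real s"
proof -
  let ?S = "{j. j < p \<and> v j \<noteq> 0}"
  have fin: "finite ?S" by simp
  have sub: "?S \<subseteq> {..<p}" by auto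
  have "(\<Sum>j<p. \<bar>v j\<bar>) = (\<Sum>j\<in>?S. \<bar>v j\<bar>)"
    by (rule sum.mono_neutral_right) auto
  moreover have "(\<Sum>j\<in>?S. \<bar>v j\<bar>)\<^sup>2 \<le> (\<Sum>j\<in>?S. \<bar>v j\<bar>\<^sup>2) * real (card ?S)"
    by (rule sum_squared_le_sum_of_squares)
  moreover have "(\<Sum>j\<in>?S. \<bar>v j\<bar>\<^sup>2) = (\<Sum>j<p. (v j)\<^sup>2)"
    by simp (rule sum.mono_neutral_left, auto)
  moreover have "(\<Sum>j<p. (v j)\<^sup>2) = 1" "card ?S \<le> s"
    using assms by (auto simp: sparse_sphere_def unit_sphere_def)
  ultimately show ?thesis by (simp add: l1_outer)
qed

lemma outer_in_N: "v \<in> sparse_sphere p s \<Longrightarrow> real s \<le> s' \<Longrightarrow> outer v \<in> N_set p s'"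
  using l1_outer_sparse[of v p s] outer_psd[of p v] outer_trace_unit[of v p]
  by (auto simp: N_set_def sparse_sphere_def)

lemma evec_in_N: "j < p \<Longrightarrow> 1 \<le> s' \<Longrightarrow> outer (evec j) \<in> N_set p s'"
  using outer_in_N[OF evec_sparse[of j p 1]] by auto

lemma N_nonempty: "1 \<le> p \<Longrightarrow> 1 \<le> s' \<Longrightarrow> N_set p s' \<noteq> {}"
  using evec_in_N[of 0 p s'] by auto

lemma trace_bound:
  assumes "\<forall>j<p. \<forall>k<p. \<bar>A j k\<bar> \<le> c"
  shows "\<bar>trace_p p (mat_mult_p p A Z)\<bar> \<le> c * entry_l1_p p Z"
proof -
  have "\<bar>trace_p p (mat_mult_p p A Z)\<bar> \<le> (\<Sum>j<p. \<Sum>l<p. \<bar>A j l * Z l j\<bar>)"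
    unfolding trace_p_def mat_mult_p_def
    by (rule order.trans[OF sum_abs]) (intro sum_mono sum_abs)
  also have "\<dots> \<le> (\<Sum>j<p. \<Sum>l<p. c * \<bar>Z l j\<bar>)"
    using assms by (intro sum_mono) (simp add: abs_mult mult_right_mono)
  also have "\<dots> = c * (\<Sum>j<p. \<Sum>l<p. \<bar>Z l j\<bar>)"
    by (simp add: sum_distrib_left)
  also have "\<dots> = c * (\<Sum>l<p. \<Sum>j<p. \<bar>Z l j\<bar>)"
    by (subst sum.swap) (rule refl)
  finally show ?thesis by (simp add: entry_l1_p_def)
qed

lemma lam_hat_le:
  assumes "1 \<le> p" "1 \<le> s" "\<forall>j<p. \<forall>k<p. \<bar>A j k\<bar> \<le> c"
  shows "lam_hat_s p s A \<le> real s * c"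
proof -
  have c0: "0 \<le> c" using assms(1,3) by (meson abs_ge_zero order_trans less_le_trans zero_less_one)
  show ?thesis
    unfolding lam_hat_s_def
  proof (rule cSUP_least)
    show "N_set p (real s) \<noteq> {}" using N_nonempty assms by simp
  next
    fix Z assume "Z \<in> N_set p (real s)"
    then have "entry_l1_p p Z \<le> real s" by (simp add: N_set_def)
    then have "c * entry_l1_p p Z \<le> c * real s" using c0 by (simp add: mult_left_mono)
    then show "\<bar>trace_p p (mat_mult_p p A Z)\<bar> \<le> real s * c"
      using trace_bound[OF assms(3), of Z] by (simp add: mult.commute)
  qed
qed

lemma lam_hat_ge:
  assumes "1 \<le> p" "1 \<le> s" "Z \<in> N_set p (real s)"
  shows "\<bar>trace_p p (mat_mult_p p A Z)\<bar> \<le> lam_hat_s p s A"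
proof -
  let ?c = "\<Sum>j<p. \<Sum>k<p. \<bar>A j k\<bar>"
  have b: "\<forall>j<p. \<forall>k<p. \<bar>A j k\<bar> \<le> ?c"
  proof (intro allI impI)
    fix j k assume jk: "j < p" "k < p"
    have "\<bar>A j k\<bar> \<le> (\<Sum>k<p. \<bar>A j k\<bar>)"
      using jk by (intro member_le_sum) auto
    also have "\<dots> \<le> ?c" using jk
      by (intro member_le_sum[where f="\<lambda>j. \<Sum>k<p. \<bar>A j k\<bar>"]) (auto intro: sum_nonneg)
    finally show "\<bar>A j k\<bar> \<le> ?c" .
  qed
  have "bdd_above ((\<lambda>Z. \<bar>trace_p p (mat_mult_p p A Z)\<bar>) ` N_set p (real s))"
    using trace_bound[OF b] by (intro bdd_aboveI[where M="?c * real s"])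
      (auto simp: N_set_def intro: order.trans[OF _ mult_left_mono] sum_nonneg)
  then show ?thesis unfolding lam_hat_s_def using assms(3) by (rule cSUP_upper2) simp
qed

lemma lam_hat_diag:
  assumes "1 \<le> p" "1 \<le> s" "j < p"
  shows "\<bar>A j j\<bar> \<le> lam_hat_s p s A"
  using lam_hat_ge[OF assms(1,2) evec_in_N[OF assms(3)], of A] assms
  by (simp add: trace_outer quad_form_evec)

definition zmix :: "vec \<Rightarrow> mat" where
  "zmix v = (\<lambda>j k. (outer v j k + outer (evec 0) j k) / 2)"

lemma zmix_in_N:
  assumes "1 \<le> p" "v \<in> sparse_sphere p s" "real s + 1 \<le> 2 * s'"
  shows "zmix v \<in> N_set p s'"
proof -
  have qf: "quad_form p (zmix v) x = (quad_form p (outer v) x + quad_form p (outer (evec 0)) x) / 2" for x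
    by (simp add: quad_form_def zmix_def sum_divide_distrib[symmetric] sum.distrib
        distrib_left distrib_right)
  have "psd_p p (zmix v)"
  proof -
    have "symmetric_p p (zmix v)" by (simp add: symmetric_p_def zmix_def outer_def mult.commute)
    moreover have "0 \<le> quad_form p (zmix v) x" for x
      using outer_psd[of p v] outer_psd[of p "evec 0"] unfolding qf psd_p_def by simp
    ultimately show ?thesis by (simp add: psd_p_def)
  qed
  moreover have "trace_p p (zmix v) = 1"
  proof -
    have "trace_p p (zmix v) = (trace_p p (outer v) + trace_p p (outer (evec 0))) / 2"
      unfolding trace_p_def zmix_def by (simp add: sum.distrib sum_divide_distrib[symmetric])
    then show ?thesis
      using outer_trace_unit[of v p] outer_trace_unit[OF evec_unit[of 0 p]] assms
      by (simp add: sparse_sphere_def)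
  qed
  moreover have "entry_l1_p p (zmix v) \<le> s'"
  proof -
    have "entry_l1_p p (zmix v) \<le> (\<Sum>j<p. \<Sum>k<p. (\<bar>outer v j k\<bar> + \<bar>outer (evec 0) j k\<bar>) / 2)"
      unfolding entry_l1_p_def zmix_def by (intro sum_mono) (simp add: abs_triangle_ineq)
    also have "\<dots> = (entry_l1_p p (outer v) + entry_l1_p p (outer (evec 0))) / 2"
      unfolding entry_l1_p_def by (simp add: sum.distrib sum_divide_distrib[symmetric])
    also have "\<dots> \<le> (real s + 1) / 2"
      using l1_outer_sparse[OF assms(2)] l1_outer_sparse[OF evec_sparse[of 0 p 1]] assms(1)
      by simp
    finally show ?thesis using assms(3) by simp
  qed
  ultimately show ?thesis by (simp add: N_set_def)
qed

lemma lam_hat_sparse_lower: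
  assumes "1 \<le> p" "v \<in> sparse_sphere p s" "real s + 1 \<le> 2 * real s'" "1 \<le> s'"
  shows "\<bar>quad_form p A v\<bar> \<le> 4 * lam_hat_s p s' A"
proof (cases "\<bar>A 0 0\<bar> * 2 \<ge> \<bar>quad_form p A v\<bar>")
  case True
  then show ?thesis using lam_hat_diag[OF assms(1,4), of 0 A] assms(1) by simp
next
  case False
  have "trace_p p (mat_mult_p p A (zmix v)) = (quad_form p A v + A 0 0) / 2"
  proof -
    have "trace_p p (mat_mult_p p A (zmix v)) =
       (trace_p p (mat_mult_p p A (outer v)) + trace_p p (mat_mult_p p A (outer (evec 0)))) / 2"
      unfolding trace_p_def mat_mult_p_def zmix_def
      by (simp add: sum.distrib sum_divide_distrib[symmetric] distrib_left)
    then show ?thesis using assms(1) by (simp add: trace_outer quad_form_evec)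
  qed
  moreover have "\<bar>trace_p p (mat_mult_p p A (zmix v))\<bar> \<le> lam_hat_s p s' A"
    by (rule lam_hat_ge[OF assms(1,4) zmix_in_N[OF assms(1,2,3)]])
  ultimately show ?thesis using False by (simp add: abs_if split: if_splits)
qed

lemma unit_sphere_coord: "v \<in> unit_sphere p \<Longrightarrow> j < p \<Longrightarrow> \<bar>v j\<bar> \<le> 1"
proof -
  assume v: "v \<in> unit_sphere p" and j: "j < p"
  have "(v j)\<^sup>2 \<le> (\<Sum>l<p. (v l)\<^sup>2)" using j by (intro member_le_sum) auto
  then have "(v j)\<^sup>2 \<le> 1" using v by (simp add: unit_sphere_def)
  then show ?thesis by (simp add: abs_square_le_1)
qed

lemma quad_bound:
  assumes "v \<in> unit_sphere p"
  shows "\<bar>quad_form p A v\<bar> \<le> (\<Sum>j<p. \<Sum>k<p. \<bar>A j k\<bar>)"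
  unfolding quad_form_def
proof (rule order.trans[OF sum_abs], intro sum_mono order.trans[OF sum_abs])
  fix j k assume "j \<in> {..<p}" "k \<in> {..<p}"
  then have "\<bar>v j\<bar> \<le> 1" "\<bar>v k\<bar> \<le> 1" using unit_sphere_coord[OF assms] by auto
  then have "\<bar>v j\<bar> * \<bar>A j k\<bar> * \<bar>v k\<bar> \<le> 1 * \<bar>A j k\<bar> * 1"
    by (intro mult_mono) (auto intro: mult_le_one)
  then show "\<bar>v j * A j k * v k\<bar> \<le> \<bar>A j k\<bar>" by (simp add: abs_mult)
qed

lemma sparse_nonempty: "j < p \<Longrightarrow> 1 \<le> s \<Longrightarrow> sparse_sphere p s \<noteq> {}"
  using evec_sparse by blast

lemma lam_max_bdd: "bdd_above ((\<lambda>v. \<bar>quad_form p A v\<bar>) ` sparse_sphere p s)"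
  by (rule bdd_aboveI[where M="\<Sum>j<p. \<Sum>k<p. \<bar>A j k\<bar>"])
     (auto simp: sparse_sphere_def intro: quad_bound)

lemma lam_max_ge: "v \<in> sparse_sphere p s \<Longrightarrow> \<bar>quad_form p A v\<bar> \<le> lam_max_s p s A"
  unfolding lam_max_s_def by (rule cSUP_upper[OF _ lam_max_bdd])

lemma lam_max_diag: "j < p \<Longrightarrow> 1 \<le> s \<Longrightarrow> \<bar>A j j\<bar> \<le> lam_max_s p s A"
  using lam_max_ge[OF evec_sparse, of j p s A] by (simp add: quad_form_evec)

lemma lam_max_le:
  assumes "1 \<le> p" "1 \<le> s" "\<And>v. v \<in> sparse_sphere p s \<Longrightarrow> \<bar>quad_form p A v\<bar> \<le> c"
  shows "lam_max_s p s A \<le> c"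
  unfolding lam_max_s_def
  by (rule cSUP_least) (use sparse_nonempty[of 0 p s] assms in auto)

lemma lam_max_approx:
  assumes "1 \<le> p" "1 \<le> s" "0 < lam_max_s p s A"
  shows "\<exists>v\<in>sparse_sphere p s. lam_max_s p s A / 2 < \<bar>quad_form p A v\<bar>"
proof (rule ccontr)
  assume "\<not> ?thesis"
  then have "lam_max_s p s A \<le> lam_max_s p s A / 2"
    by (intro lam_max_le[OF assms(1,2)]) auto
  then show False using assms(3) by simp
qed

lemma quad_form_diff:
  "quad_form p (\<lambda>j k. A j k - B j k) v = quad_form p A v - quad_form p B v"
  by (simp add: quad_form_def sum_subtractf[symmetric] algebra_simps)

lemma pos_def_nonneg:
  assumes "pos_def_p p A" shows "0 \<le> quad_form p A v"
proof (cases "\<exists>j<p. v j \<noteq> 0")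
  case True then show ?thesis using assms by (auto simp: pos_def_p_def intro: less_imp_le)
next
  case False then show ?thesis by (simp add: quad_form_def)
qed

lemma lam_max_diff_le:
  assumes "1 \<le> p" "1 \<le> s" "pos_def_p p S1" "pos_def_p p S2"
  shows "lam_max_s p s (\<lambda>j k. S1 j k - S2 j k) \<le> max (lam_max_s p s S1) (lam_max_s p s S2)"
proof (rule lam_max_le[OF assms(1,2)])
  fix v assume v: "v \<in> sparse_sphere p s"
  have "0 \<le> quad_form p S1 v" "0 \<le> quad_form p S2 v"
    using pos_def_nonneg assms by auto
  moreover have "\<bar>quad_form p S1 v\<bar> \<le> lam_max_s p s S1" "\<bar>quad_form p S2 v\<bar> \<le> lam_max_s p s S2"
    using lam_max_ge[OF v] by auto
  ultimately show "\<bar>quad_form p (\<lambda>j k. S1 j k - S2 j k) v\<bar> \<le> max (lam_max_s p s S1) (lam_max_s p s S2)"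
    unfolding quad_form_diff by (simp add: abs_if max_def split: if_splits)
qed

lemma lam_max_pos:
  assumes "1 \<le> p" "1 \<le> s" "pos_def_p p S"
  shows "0 < lam_max_s p s S"
proof -
  have "0 < quad_form p S (evec 0)"
    using assms(1,3) unfolding pos_def_p_def by (auto simp: evec_def intro!: exI[of _ 0])
  then have "0 < S 0 0" using assms(1) by (simp add: quad_form_evec)
  then show ?thesis using lam_max_diag[of 0 p s S] assms by simp
qed

lemma quad_form_sum:
  "quad_form p (\<lambda>j k. \<Sum>i\<in>I. M i j k) v = (\<Sum>i\<in>I. quad_form p (M i) v)"
proof -
  have "quad_form p (\<lambda>j k. \<Sum>i\<in>I. M i j k) v = (\<Sum>j<p. \<Sum>k<p. \<Sum>i\<in>I. v j * M i j k * v k)"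
    unfolding quad_form_def by (simp add: sum_distrib_left sum_distrib_right)
  also have "\<dots> = (\<Sum>j<p. \<Sum>i\<in>I. \<Sum>k<p. v j * M i j k * v k)"
    by (intro sum.cong refl) (rule sum.swap)
  also have "\<dots> = (\<Sum>i\<in>I. \<Sum>j<p. \<Sum>k<p. v j * M i j k * v k)"
    by (rule sum.swap)
  finally show ?thesis by (simp add: quad_form_def)
qed

lemma quad_form_scale:
  "quad_form p (\<lambda>j k. c * M j k) v = c * quad_form p M v"
  by (simp add: quad_form_def sum_distrib_left mult_ac)

lemma quad_Sigma_hat_1:
  "quad_form p (Sigma_hat_1 X t) v = (1 / real t) * (\<Sum>i\<in>{1..t}. (inner_p p v (X i))\<^sup>2)"
proof -
  have "Sigma_hat_1 X t = (\<lambda>j k. (1 / real t) * (\<Sum>i\<in>{1..t}. outer (X i) j k))"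
    by (simp add: Sigma_hat_1_def outer_def)
  then show ?thesis
    by (simp only: quad_form_scale quad_form_sum quad_form_outer)
       (simp add: inner_p_def mult.commute)
qed

lemma quad_Sigma_hat_2:
  "quad_form p (Sigma_hat_2 n X t) v = (1 / real t) * (\<Sum>i\<in>{1..t}. (inner_p p v (X (n - i + 1)))\<^sup>2)"
proof -
  have "Sigma_hat_2 n X t = (\<lambda>j k. (1 / real t) * (\<Sum>i\<in>{1..t}. outer (X (n - i + 1)) j k))"
    by (simp add: Sigma_hat_2_def outer_def)
  then show ?thesis
    by (simp only: quad_form_scale quad_form_sum quad_form_outer)
       (simp add: inner_p_def mult.commute)
qed

lemma sum_rev_index:
  fixes t n :: nat
  assumes "t \<le> n"
  shows "(\<Sum>i\<in>{1..t}. f (n - i + 1)) = (\<Sum>i\<in>{n - t + 1..n}. (f i :: real))"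
proof (rule sum.reindex_bij_witness[where i="\<lambda>i. n - i + 1" and j="\<lambda>i. n - i + 1"])
  fix a assume "a \<in> {1..t}"
  then have a: "1 \<le> a" "a \<le> t" by auto
  show "n - (n - a + 1) + 1 = a" using a assms by arith
  show "n - a + 1 \<in> {n - t + 1..n}" using a assms by auto
next
  fix b assume "b \<in> {n - t + 1..n}"
  then have b: "n - t + 1 \<le> b" "b \<le> n" by auto
  show "n - (n - b + 1) + 1 = b" using b assms by arith
  show "n - b + 1 \<in> {1..t}" using b assms by auto
qed simp

lemma Sigma_hat_offdiag:
  "\<bar>Sigma_hat_1 X t j k\<bar> \<le> (Sigma_hat_1 X t j j + Sigma_hat_1 X t k k) / 2"
proof -
  have "\<bar>\<Sum>i\<in>{1..t}. X i j * X i k\<bar> \<le> (\<Sum>i\<in>{1..t}. ((X i j)\<^sup>2 + (X i k)\<^sup>2) / 2)"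
  proof (rule order.trans[OF sum_abs], rule sum_mono)
    fix i
    have "0 \<le> (\<bar>X i j\<bar> - \<bar>X i k\<bar>)\<^sup>2" by simp
    then show "\<bar>X i j * X i k\<bar> \<le> ((X i j)\<^sup>2 + (X i k)\<^sup>2) / 2"
      by (simp add: power2_eq_square abs_mult algebra_simps)
  qed
  then have h: "\<bar>\<Sum>i\<in>{1..t}. X i j * X i k\<bar> * 2 \<le>
      ((\<Sum>i\<in>{1..t}. (X i j)\<^sup>2) + (\<Sum>i\<in>{1..t}. (X i k)\<^sup>2))"
    by (simp add: sum.distrib sum_divide_distrib[symmetric])
  have "\<bar>\<Sum>i\<in>{1..t}. X i j * X i k\<bar> / real t \<le>
      ((\<Sum>i\<in>{1..t}. (X i j)\<^sup>2) + (\<Sum>i\<in>{1..t}. (X i k)\<^sup>2)) / (real t * 2)"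
    using h by (cases "t = 0") (simp_all add: field_simps)
  then show ?thesis by (simp add: Sigma_hat_1_def abs_mult power2_eq_square add_divide_distrib)
qed

lemma Sigma_hat_diag: "Sigma_hat_1 X t j j = (1 / real t) * (\<Sum>i\<in>{1..t}. (X i j)\<^sup>2)"
  by (simp add: Sigma_hat_1_def power2_eq_square)

lemma Sigma_hat_2_diag: "Sigma_hat_2 n X t j j = (1 / real t) * (\<Sum>i\<in>{1..t}. (X (n - i + 1) j)\<^sup>2)"
  by (simp add: Sigma_hat_2_def power2_eq_square)

lemma exp_taylor2: "exp (y::real) \<le> 1 + y + y\<^sup>2 * exp \<bar>y\<bar>"
proof (cases "y \<ge> 0")
  case True
  have a: "1 - y \<le> exp (- y)" using exp_ge_add_one_self[of "-y"] by simp
  have "exp y * (1 - y) \<le> 1" using mult_left_mono[OF a, of "exp y"] by (simp add: exp_minus field_simps)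
  then have e1: "exp y - 1 \<le> y * exp y" by (simp add: algebra_simps)
  have "exp y - 1 - y \<le> y * (exp y - 1)" using e1 by (simp add: algebra_simps)
  also have "\<dots> \<le> y * (y * exp y)" using e1 True by (intro mult_left_mono) auto
  finally show ?thesis using True by (simp add: power2_eq_square)
next
  case False
  define a where "a = - y"
  have a0: "a > 0" using False by (simp add: a_def)
  have "1 + a \<le> exp a" by (rule exp_ge_add_one_self)
  then have "exp (-a) * (1 + a) \<le> 1"
    using mult_left_mono[of "1 + a" "exp a" "exp (-a)"] by (simp add: exp_minus field_simps)
  then have "exp (-a) - 1 + a \<le> a * (1 - exp (-a))" by (simp add: algebra_simps)
  also have "\<dots> \<le> a * a" using exp_ge_add_one_self[of "-a"] a0 by (intro mult_left_mono) auto
  also have "\<dots> \<le> a * a * exp a" using a0 by simp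
  finally show ?thesis using a0 by (simp add: a_def power2_eq_square)
qed

lemma sq_le_exp: assumes "(z::real) \<ge> 0" shows "z\<^sup>2 \<le> 64 * exp (3 * z / 8)"
proof -
  have "z \<le> 8 * exp (3 * z / 16)"
    using exp_ge_add_one_self[of "3 * z / 16"] assms by linarith
  then have "z\<^sup>2 \<le> (8 * exp (3 * z / 16))\<^sup>2" using assms by (intro power_mono) auto
  also have "\<dots> = 64 * exp (3 * z / 8)"
    by (simp add: power2_eq_square exp_add[symmetric])
  finally show ?thesis .
qed

lemma chernoff_prod:
  fixes W :: "'i \<Rightarrow> 'a \<Rightarrow> real"
  assumes P: "prob_space M" and fin: "finite I" and ind: "prob_space.indep_vars M (\<lambda>_. borel) W I"
    and s: "s > 0" and int: "\<And>i. i \<in> I \<Longrightarrow> integrable M (\<lambda>x. exp (s * W i x))"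
  shows "measure M {x\<in>space M. a \<le> (\<Sum>i\<in>I. W i x)} \<le> exp (- s * a) * (\<Prod>i\<in>I. \<integral>x. exp (s * W i x) \<partial>M)"
proof -
  interpret prob_space M by (rule P)
  have ind2: "indep_vars (\<lambda>_. borel) (\<lambda>i x. exp (s * W i x)) I"
    by (rule indep_vars_compose2[OF ind]) simp
  have e: "(\<lambda>x. exp (s * (\<Sum>i\<in>I. W i x))) = (\<lambda>x. \<Prod>i\<in>I. exp (s * W i x))"
    by (simp add: sum_distrib_left exp_sum fin)
  have intP: "integrable M (\<lambda>x. exp (s * (\<Sum>i\<in>I. W i x)))"
    unfolding e by (rule indep_vars_integrable[OF fin ind2 int])
  have intE: "(\<integral>x. exp (s * (\<Sum>i\<in>I. W i x)) \<partial>M) = (\<Prod>i\<in>I. \<integral>x. exp (s * W i x) \<partial>M)"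
    unfolding e by (rule indep_vars_lebesgue_integral[OF fin ind2 int])
  have si: "set_integrable M (space M) (\<lambda>x. exp (s * (\<Sum>i\<in>I. W i x)))"
    unfolding set_integrable_def
    by (rule Bochner_Integration.integrable_cong[THEN iffD1, OF refl _ intP]) (simp add: indicator_def)
  have "measure M {x\<in>space M. a \<le> (\<Sum>i\<in>I. W i x)} \<le>
     exp (- s * a) * (\<integral>x\<in>space M. exp (s * (\<Sum>i\<in>I. W i x)) \<partial>M)"
    by (rule Chernoff_ineq_ge[OF s si]) simp
  also have "(\<integral>x\<in>space M. exp (s * (\<Sum>i\<in>I. W i x)) \<partial>M) = (\<Prod>i\<in>I. \<integral>x. exp (s * W i x) \<partial>M)"
    using set_integral_space[OF intP] intE by simp
  finally show ?thesis .
qed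

lemma mgf_bound:
  fixes W :: "'a \<Rightarrow> real"
  assumes P: "prob_space M" and meas: "W \<in> borel_measurable M" and K: "K > 0"
    and intE: "integrable M (\<lambda>x. exp (\<bar>W x\<bar> / K))" and E2: "(\<integral>x. exp (\<bar>W x\<bar> / K) \<partial>M) \<le> 2"
    and th: "\<bar>\<theta>\<bar> * K \<le> 1 / 8"
  shows "integrable M W"
    and "integrable M (\<lambda>x. exp (\<theta> * (W x - (\<integral>y. W y \<partial>M))))"
    and "(\<integral>x. exp (\<theta> * (W x - (\<integral>y. W y \<partial>M))) \<partial>M) \<le> exp (400 * \<theta>\<^sup>2 * K\<^sup>2)"
proof -
  interpret prob_space M by (rule P)
  have intK: "integrable M (\<lambda>x. K * exp (\<bar>W x\<bar> / K))" using intE by simp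
  have bW: "\<bar>W x\<bar> \<le> K * exp (\<bar>W x\<bar> / K)" for x
  proof -
    have "\<bar>W x\<bar> / K \<le> exp (\<bar>W x\<bar> / K)" using exp_ge_add_one_self[of "\<bar>W x\<bar> / K"] by linarith
    then show ?thesis using K by (simp add: field_simps)
  qed
  show intW: "integrable M W"
    by (rule Bochner_Integration.integrable_bound[OF intK meas]) (use bW K in auto)
  define \<mu> where "\<mu> = (\<integral>y. W y \<partial>M)"
  have "\<bar>\<mu>\<bar> \<le> (\<integral>y. \<bar>W y\<bar> \<partial>M)" unfolding \<mu>_def by (rule integral_abs_bound)
  also have "\<dots> \<le> (\<integral>y. K * exp (\<bar>W y\<bar> / K) \<partial>M)"
    by (intro integral_mono intK) (use intW bW in auto)
  also have "\<dots> \<le> K * 2" using E2 K by simp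
  finally have mu: "\<bar>\<mu>\<bar> \<le> 2 * K" by simp
  define c where "c = 64 * exp 1 * \<theta>\<^sup>2 * K\<^sup>2"
  define g where "g x = 1 + \<theta> * (W x - \<mu>) + c * exp (\<bar>W x\<bar> / K)" for x
  have pt: "exp (\<theta> * (W x - \<mu>)) \<le> g x" for x
  proof -
    define y where "y = \<theta> * (W x - \<mu>)"
    define z where "z = \<bar>W x - \<mu>\<bar> / K"
    have z0: "z \<ge> 0" using K by (simp add: z_def)
    have ay: "\<bar>y\<bar> = \<bar>\<theta>\<bar> * K * z" using K by (simp add: y_def z_def abs_mult)
    have ay2: "\<bar>y\<bar> \<le> z / 8" unfolding ay using th z0 by (metis mult_right_mono mult.commute times_divide_eq_right mult_1 times_divide_eq_left)
    have "y\<^sup>2 = \<theta>\<^sup>2 * K\<^sup>2 * z\<^sup>2" using ay by (metis abs_mult power2_abs power_mult_distrib)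
    then have "y\<^sup>2 * exp \<bar>y\<bar> \<le> \<theta>\<^sup>2 * K\<^sup>2 * (64 * exp (3 * z / 8)) * exp (z / 8)"
      using sq_le_exp[OF z0] ay2 by (intro mult_mono) (auto intro: mult_left_mono)
    also have "\<dots> = 64 * \<theta>\<^sup>2 * K\<^sup>2 * exp (z / 2)"
      by (simp add: exp_add[symmetric] mult_ac)
    also have "exp (z / 2) \<le> exp 1 * exp (\<bar>W x\<bar> / K)"
    proof -
      have "z \<le> \<bar>W x\<bar> / K + 2" using mu K
        by (simp add: z_def field_simps)
      then have "z / 2 \<le> 1 + \<bar>W x\<bar> / K" using K by (simp add: field_simps)
      then show ?thesis by (simp add: exp_add[symmetric])
    qed
    then have "64 * \<theta>\<^sup>2 * K\<^sup>2 * exp (z / 2) \<le> 64 * \<theta>\<^sup>2 * K\<^sup>2 * (exp 1 * exp (\<bar>W x\<bar> / K))"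
      by (intro mult_left_mono) auto
    finally have "y\<^sup>2 * exp \<bar>y\<bar> \<le> c * exp (\<bar>W x\<bar> / K)" by (simp add: c_def mult_ac)
    then show ?thesis using exp_taylor2[of y] by (simp add: g_def y_def)
  qed
  have intg: "integrable M g" unfolding g_def using intW intE by auto
  show intX: "integrable M (\<lambda>x. exp (\<theta> * (W x - (\<integral>y. W y \<partial>M))))"
    unfolding \<mu>_def[symmetric]
    by (rule Bochner_Integration.integrable_bound[OF intg]) (use meas pt in \<open>auto intro: order.trans[OF _ abs_ge_self]\<close>)
  have "(\<integral>x. exp (\<theta> * (W x - \<mu>)) \<partial>M) \<le> (\<integral>x. g x \<partial>M)"
    by (intro integral_mono intg) (use intX[unfolded \<mu>_def[symmetric]] pt in auto)
  also have "(\<integral>x. g x \<partial>M) = 1 + \<theta> * ((\<integral>x. W x \<partial>M) - \<mu>) + c * (\<integral>x. exp (\<bar>W x\<bar> / K) \<partial>M)"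
    unfolding g_def using intW intE by (simp add: prob_space)
  also have "\<dots> \<le> 1 + c * 2"
  proof -
    have c0: "c \<ge> 0" by (simp add: c_def)
    show ?thesis using mult_left_mono[OF E2 c0] by (simp add: \<mu>_def)
  qed
  also have "\<dots> \<le> 1 + 400 * \<theta>\<^sup>2 * K\<^sup>2"
  proof -
    have "exp (1::real) \<le> 3" using exp_le by simp
    then have "128 * exp 1 * (\<theta>\<^sup>2 * K\<^sup>2) \<le> 400 * (\<theta>\<^sup>2 * K\<^sup>2)"
      by (intro mult_right_mono) auto
    then have "c * 2 \<le> 400 * \<theta>\<^sup>2 * K\<^sup>2" unfolding c_def by (simp add: mult_ac)
    then show ?thesis by simp
  qed
  also have "\<dots> \<le> exp (400 * \<theta>\<^sup>2 * K\<^sup>2)" by (rule exp_ge_add_one_self)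
  finally show "(\<integral>x. exp (\<theta> * (W x - (\<integral>y. W y \<partial>M))) \<partial>M) \<le> exp (400 * \<theta>\<^sup>2 * K\<^sup>2)"
    by (simp add: \<mu>_def)
qed


lemma bern_exponent:
  fixes K x N :: real
  assumes K: "K > 0" and x: "x > 0" and N: "N \<ge> 0"
  shows "\<exists>\<theta>>0. \<theta> * K \<le> 1 / 8 \<and>
     - \<theta> * (50 * K * (sqrt (x * N) + x)) + 400 * N * \<theta>\<^sup>2 * K\<^sup>2 \<le> - x"
proof (cases "x \<le> 25 * N")
  case True
  define r where "r = sqrt x"
  define q where "q = sqrt N"
  have r0: "r > 0" using x by (simp add: r_def)
  have q0: "q > 0" using True x by (simp add: q_def)
  have xr: "x = r\<^sup>2" using x by (simp add: r_def)
  have Nq: "N = q\<^sup>2" using N by (simp add: q_def)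
  have sq: "sqrt (x * N) = r * q" by (simp add: r_def q_def real_sqrt_mult)
  have rq: "r \<le> 5 * q"
  proof -
    have "sqrt x \<le> sqrt (25 * N)" using True by simp
    then show ?thesis by (simp add: r_def q_def real_sqrt_mult)
  qed
  define \<theta> where "\<theta> = r / (40 * K * q)"
  have t0: "\<theta> > 0" using r0 q0 K by (simp add: \<theta>_def)
  have tK: "\<theta> * K \<le> 1 / 8" using rq q0 K by (simp add: \<theta>_def field_simps)
  have e1: "- \<theta> * (50 * K * (r * q + r\<^sup>2)) = - (5 / 4) * r\<^sup>2 - (5/4) * r ^ 3 / q"
    using K q0 by (simp add: \<theta>_def field_simps power2_eq_square power3_eq_cube)
  have e2: "400 * q\<^sup>2 * \<theta>\<^sup>2 * K\<^sup>2 = r\<^sup>2 / 4"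
    using K q0 by (simp add: \<theta>_def field_simps power2_eq_square)
  have "(5/4) * r ^ 3 / q \<ge> 0" using r0 q0 by simp
  moreover have "sqrt (x * N) + x = r * q + r\<^sup>2" using sq xr by simp
  ultimately have "- \<theta> * (50 * K * (sqrt (x * N) + x)) + 400 * N * \<theta>\<^sup>2 * K\<^sup>2 \<le> - x"
    using e1 e2 Nq xr by simp
  then show ?thesis using t0 tK by blast
next
  case False
  define \<theta> where "\<theta> = 1 / (8 * K)"
  have t0: "\<theta> > 0" using K by (simp add: \<theta>_def)
  have tK: "\<theta> * K \<le> 1 / 8" using K by (simp add: \<theta>_def)
  have e1: "- \<theta> * (50 * K * (sqrt (x * N) + x)) = - (25 / 4) * (sqrt (x * N) + x)"
    using K by (simp add: \<theta>_def field_simps)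
  have e2: "400 * N * \<theta>\<^sup>2 * K\<^sup>2 = (25 / 4) * N"
    using K by (simp add: \<theta>_def field_simps power2_eq_square)
  have sq0: "sqrt (x * N) \<ge> 0" using x N by simp
  have "- \<theta> * (50 * K * (sqrt (x * N) + x)) + 400 * N * \<theta>\<^sup>2 * K\<^sup>2 \<le> - x"
    unfolding e1 e2 using False sq0 x by (simp add: algebra_simps) (smt (verit) real_sqrt_ge_zero)
  then show ?thesis using t0 tK by blast
qed

lemma bern_tail:
  fixes W :: "'i \<Rightarrow> 'a \<Rightarrow> real"
  assumes P: "prob_space M" and fin: "finite I" and ind: "prob_space.indep_vars M (\<lambda>_. borel) W I"
    and K: "K > 0"
    and mom1: "\<And>i. i \<in> I \<Longrightarrow> integrable M (\<lambda>x. exp (\<bar>W i x\<bar> / K))"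
    and mom2: "\<And>i. i \<in> I \<Longrightarrow> (\<integral>x. exp (\<bar>W i x\<bar> / K) \<partial>M) \<le> 2"
    and th: "\<theta> > 0" "\<theta> * K \<le> 1 / 8" and sg: "\<bar>\<sigma>\<bar> = 1"
  shows "measure M {\<omega>\<in>space M. a \<le> (\<Sum>i\<in>I. \<sigma> * (W i \<omega> - (\<integral>y. W i y \<partial>M)))}
     \<le> exp (- \<theta> * a + 400 * real (card I) * \<theta>\<^sup>2 * K\<^sup>2)"
proof -
  interpret prob_space M by (rule P)
  have rv: "i \<in> I \<Longrightarrow> W i \<in> borel_measurable M" for i
    using ind by (simp add: indep_vars_def)
  let ?V = "\<lambda>i \<omega>. \<sigma> * (W i \<omega> - (\<integral>y. W i y \<partial>M))"
  have ind2: "indep_vars (\<lambda>_. borel) ?V I"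
    by (rule indep_vars_compose2[OF ind]) simp
  have mg: "integrable M (\<lambda>x. exp ((\<theta> * \<sigma>) * (W i x - (\<integral>y. W i y \<partial>M))))"
      "(\<integral>x. exp ((\<theta> * \<sigma>) * (W i x - (\<integral>y. W i y \<partial>M))) \<partial>M) \<le> exp (400 * (\<theta> * \<sigma>)\<^sup>2 * K\<^sup>2)"
    if "i \<in> I" for i
    using mgf_bound[OF P rv[OF that] K mom1[OF that] mom2[OF that], of "\<theta> * \<sigma>"] th sg
    by (auto simp: abs_mult)
  have sq: "(\<theta> * \<sigma>)\<^sup>2 = \<theta>\<^sup>2" using sg by (simp add: power_mult_distrib abs_square_eq_1)
  have "measure M {\<omega>\<in>space M. a \<le> (\<Sum>i\<in>I. ?V i \<omega>)} \<le> exp (- \<theta> * a) * (\<Prod>i\<in>I. \<integral>x. exp (\<theta> * ?V i x) \<partial>M)"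
    by (rule chernoff_prod[OF P fin ind2 th(1)]) (use mg in \<open>simp add: mult.assoc\<close>)
  also have "(\<Prod>i\<in>I. \<integral>x. exp (\<theta> * ?V i x) \<partial>M) \<le> (\<Prod>i\<in>I. exp (400 * \<theta>\<^sup>2 * K\<^sup>2))"
    by (rule prod_mono) (use mg sq in \<open>auto simp: mult.assoc intro: integral_nonneg_AE\<close>)
  also have "(\<Prod>i\<in>I. exp (400 * \<theta>\<^sup>2 * K\<^sup>2)) = exp (400 * real (card I) * \<theta>\<^sup>2 * K\<^sup>2)"
    by (simp add: exp_of_nat_mult[symmetric] mult_ac)
  finally show ?thesis by (simp add: exp_add[symmetric] mult_left_mono)
qed

lemma bernstein:
  fixes W :: "'i \<Rightarrow> 'a \<Rightarrow> real"
  assumes P: "prob_space M" and fin: "finite I" and ind: "prob_space.indep_vars M (\<lambda>_. borel) W I"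
    and K: "K > 0"
    and mom1: "\<And>i. i \<in> I \<Longrightarrow> integrable M (\<lambda>x. exp (\<bar>W i x\<bar> / K))"
    and mom2: "\<And>i. i \<in> I \<Longrightarrow> (\<integral>x. exp (\<bar>W i x\<bar> / K) \<partial>M) \<le> 2"
    and x: "x \<ge> 0"
  shows "measure M {\<omega>\<in>space M. 50 * K * (sqrt (x * real (card I)) + x)
            \<le> \<bar>\<Sum>i\<in>I. (W i \<omega> - (\<integral>y. W i y \<partial>M))\<bar>} \<le> 2 * exp (- x)"
proof (cases "x = 0")
  case True
  interpret prob_space M by (rule P)
  have "measure M {\<omega>\<in>space M. 50 * K * (sqrt (x * real (card I)) + x)
            \<le> \<bar>\<Sum>i\<in>I. (W i \<omega> - (\<integral>y. W i y \<partial>M))\<bar>} \<le> 1" by (rule prob_le_1)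
  also have "1 \<le> 2 * exp (- x)" using True by simp
  finally show ?thesis .
next
  case False
  then have x0: "x > 0" using x by simp
  interpret prob_space M by (rule P)
  have rv[measurable]: "i \<in> I \<Longrightarrow> W i \<in> borel_measurable M" for i
    using ind by (simp add: indep_vars_def)
  let ?a = "50 * K * (sqrt (x * real (card I)) + x)"
  obtain \<theta> where th: "\<theta> > 0" "\<theta> * K \<le> 1 / 8"
      and ex: "- \<theta> * ?a + 400 * real (card I) * \<theta>\<^sup>2 * K\<^sup>2 \<le> - x"
    using bern_exponent[OF K x0, of "real (card I)"] by auto
  let ?S = "\<lambda>\<omega>. \<Sum>i\<in>I. (W i \<omega> - (\<integral>y. W i y \<partial>M))"
  have Smeas: "?S \<in> borel_measurable M"
    by (intro borel_measurable_sum borel_measurable_diff rv) auto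
  have neg_sum: "\<And>g. (\<Sum>i\<in>I. (-1::real) * g i) = - sum g I" by (simp add: sum_negf)
  have t1: "measure M {\<omega>\<in>space M. ?a \<le> ?S \<omega>} \<le> exp (- x)"
  proof -
    have "measure M {\<omega>\<in>space M. ?a \<le> (\<Sum>i\<in>I. 1 * (W i \<omega> - (\<integral>y. W i y \<partial>M)))} \<le> exp (- x)"
      by (rule order.trans[OF bern_tail[OF P fin ind K mom1 mom2 th, of 1 ?a]]) (use ex in simp_all)
    then show ?thesis by (simp only: mult_1_left)
  qed
  have t2: "measure M {\<omega>\<in>space M. ?a \<le> - ?S \<omega>} \<le> exp (- x)"
  proof -
    have "measure M {\<omega>\<in>space M. ?a \<le> (\<Sum>i\<in>I. (-1) * (W i \<omega> - (\<integral>y. W i y \<partial>M)))} \<le> exp (- x)"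
      by (rule order.trans[OF bern_tail[OF P fin ind K mom1 mom2 th, of "-1" ?a]]) (use ex in simp_all)
    then show ?thesis by (simp only: neg_sum)
  qed
  have sub: "{\<omega>\<in>space M. ?a \<le> \<bar>?S \<omega>\<bar>} \<subseteq>
      {\<omega>\<in>space M. ?a \<le> ?S \<omega>} \<union> {\<omega>\<in>space M. ?a \<le> - ?S \<omega>}"
    by (auto simp: abs_if split: if_splits)
  have m1: "{\<omega>\<in>space M. ?a \<le> ?S \<omega>} \<in> events"
    using Smeas by measurable
  have m2: "{\<omega>\<in>space M. ?a \<le> - ?S \<omega>} \<in> events"
    using Smeas by measurable
  have "measure M {\<omega>\<in>space M. ?a \<le> \<bar>?S \<omega>\<bar>} \<le>
      measure M ({\<omega>\<in>space M. ?a \<le> ?S \<omega>} \<union> {\<omega>\<in>space M. ?a \<le> - ?S \<omega>})"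
    by (rule finite_measure_mono[OF sub]) (use m1 m2 in auto)
  also have "\<dots> \<le> exp (- x) + exp (- x)"
    by (rule order.trans[OF measure_Un_le[OF m1 m2]]) (use t1 t2 in simp)
  finally show ?thesis by simp
qed

lemma abc_prob: "assumption_ABC n p w u P \<Longrightarrow> prob_space P"
  by (simp add: assumption_ABC_def)

lemma abc_indep_base: "assumption_ABC n p w u P \<Longrightarrow> prob_space.indep_vars P (\<lambda>_. borel) (\<lambda>i X. X i) {1..n}"
  by (simp add: assumption_ABC_def)

lemma abc_rv:
  assumes "assumption_ABC n p w u P" "i \<in> {1..n}"
  shows "(\<lambda>X. X i) \<in> P \<rightarrow>\<^sub>M borel"
proof -
  interpret prob_space P using abc_prob[OF assms(1)] .
  show ?thesis using abc_indep_base[OF assms(1)] assms(2) by (auto simp: indep_vars_def)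
qed

lemma inner_meas[measurable]: "(\<lambda>x::nat\<Rightarrow>real. inner_p p v x) \<in> borel_measurable borel"
  unfolding inner_p_def by measurable

lemma abc_rv_inner[measurable]:
  assumes "assumption_ABC n p w u P" "i \<in> {1..n}"
  shows "(\<lambda>X. inner_p p v (X i)) \<in> borel_measurable P"
  using measurable_comp[OF abc_rv[OF assms] inner_meas] by (simp add: comp_def)

lemma abc_rv_coord[measurable]:
  assumes "assumption_ABC n p w u P" "i \<in> {1..n}"
  shows "(\<lambda>X. X i j) \<in> borel_measurable P"
proof -
  have "(\<lambda>x::nat\<Rightarrow>real. x j) \<in> borel_measurable borel" by measurable
  from measurable_comp[OF abc_rv[OF assms] this] show ?thesis by (simp add: comp_def)
qed

lemma abc_indep:
  assumes "assumption_ABC n p w u P" "I \<subseteq> {1..n}" "\<And>i. i \<in> I \<Longrightarrow> g i \<in> borel_measurable borel"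
  shows "prob_space.indep_vars P (\<lambda>_. borel) (\<lambda>i X. g i (X i)) I"
proof -
  interpret prob_space P using abc_prob[OF assms(1)] .
  have "indep_vars (\<lambda>_. borel) (\<lambda>i X. X i) I"
    by (rule indep_vars_subset[OF abc_indep_base[OF assms(1)] assms(2)])
  then show ?thesis by (rule indep_vars_compose2) (use assms(3) in auto)
qed

lemma psi2_use:
  fixes Y :: "'a \<Rightarrow> real"
  assumes Ym: "Y \<in> borel_measurable M"
    and h: "(psi2_norm M Y)\<^sup>2 \<le> ereal c" and tau: "\<tau> > 0" "c < \<tau>\<^sup>2"
  shows "integrable M (\<lambda>x. exp ((Y x)\<^sup>2 / \<tau>\<^sup>2))" "(\<integral>x. exp ((Y x)\<^sup>2 / \<tau>\<^sup>2) \<partial>M) \<le> 2"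
proof -
  define S where "S = {t. 0 < t \<and> (\<integral>\<^sup>+ x. ennreal (exp ((Y x)\<^sup>2 / t\<^sup>2)) \<partial>M) \<le> 2}"
  have N: "psi2_norm M Y = Inf (ereal ` S)" by (simp add: psi2_norm_def S_def)
  have N0: "0 \<le> psi2_norm M Y" unfolding N
    by (rule Inf_greatest) (auto simp: S_def)
  have lt: "psi2_norm M Y < ereal \<tau>"
  proof (cases "psi2_norm M Y")
    case (real a)
    then have "ereal (a\<^sup>2) \<le> ereal c" using h by simp
    then have "a\<^sup>2 < \<tau>\<^sup>2" using tau by simp
    then have "a < \<tau>" using tau N0 real by (simp add: power_less_imp_less_base)
    then show ?thesis using real by simp
  next
    case PInf
    then show ?thesis using h by simp
  next
    case MInf
    then show ?thesis using N0 by simp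
  qed
  then obtain t where t: "t \<in> S" "ereal t < ereal \<tau>" unfolding N by (auto simp: Inf_less_iff)
  have t0: "0 < t" "t < \<tau>" using t by (auto simp: S_def)
  have "(\<integral>\<^sup>+ x. ennreal (exp ((Y x)\<^sup>2 / \<tau>\<^sup>2)) \<partial>M) \<le> (\<integral>\<^sup>+ x. ennreal (exp ((Y x)\<^sup>2 / t\<^sup>2)) \<partial>M)"
  proof (rule nn_integral_mono)
    fix x
    have "t\<^sup>2 \<le> \<tau>\<^sup>2" using t0 by (intro power_mono) auto
    then have "(Y x)\<^sup>2 / \<tau>\<^sup>2 \<le> (Y x)\<^sup>2 / t\<^sup>2" using t0 by (intro divide_left_mono) auto
    then show "ennreal (exp ((Y x)\<^sup>2 / \<tau>\<^sup>2)) \<le> ennreal (exp ((Y x)\<^sup>2 / t\<^sup>2))" by simp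
  qed
  also have "\<dots> \<le> 2" using t by (simp add: S_def)
  finally have nn: "(\<integral>\<^sup>+ x. ennreal (exp ((Y x)\<^sup>2 / \<tau>\<^sup>2)) \<partial>M) \<le> 2" .
  show int: "integrable M (\<lambda>x. exp ((Y x)\<^sup>2 / \<tau>\<^sup>2))"
    by (rule integrableI_nonneg) (use Ym nn in \<open>auto simp: order_le_less_trans\<close>)
  have "ennreal (\<integral>x. exp ((Y x)\<^sup>2 / \<tau>\<^sup>2) \<partial>M) \<le> 2"
    using nn nn_integral_eq_integral[OF int] by simp
  then show "(\<integral>x. exp ((Y x)\<^sup>2 / \<tau>\<^sup>2) \<partial>M) \<le> 2"
    by (metis ennreal_le_iff ennreal_numeral zero_le_numeral)
qed

lemma abc_subg:
  assumes A: "assumption_ABC n p w u P" and i: "i \<in> {1..n}" and v: "v \<in> unit_sphere p"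
    and tau: "\<tau> > 0" "u * (\<integral>X. (inner_p p v (X i))\<^sup>2 \<partial>P) < \<tau>\<^sup>2"
  shows "integrable P (\<lambda>X. exp ((inner_p p v (X i))\<^sup>2 / \<tau>\<^sup>2))"
    "(\<integral>X. exp ((inner_p p v (X i))\<^sup>2 / \<tau>\<^sup>2) \<partial>P) \<le> 2"
proof -
  have h: "(psi2_norm P (\<lambda>X. inner_p p v (X i)))\<^sup>2 \<le> ereal (u * (\<integral>X. (inner_p p v (X i))\<^sup>2 \<partial>P))"
    using A i v by (simp add: assumption_ABC_def)
  show "integrable P (\<lambda>X. exp ((inner_p p v (X i))\<^sup>2 / \<tau>\<^sup>2))"
    "(\<integral>X. exp ((inner_p p v (X i))\<^sup>2 / \<tau>\<^sup>2) \<partial>P) \<le> 2"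
    using psi2_use[OF abc_rv_inner[OF A i] h tau] by auto
qed

lemma density_bound:
  assumes d: "distributed M lborel Z (\<lambda>y. ennreal (f y))" and fw: "\<And>y. f y \<le> w"
    and "A \<in> sets lborel" "0 \<le> w"
  shows "emeasure M (Z -` A \<inter> space M) \<le> ennreal w * emeasure lborel A"
proof -
  have "emeasure M (Z -` A \<inter> space M) = (\<integral>\<^sup>+x. ennreal (f x) * indicator A x \<partial>lborel)"
    using distributed_emeasure[OF d assms(3)] by simp
  also have "\<dots> \<le> (\<integral>\<^sup>+x. ennreal w * indicator A x \<partial>lborel)"
    by (intro nn_integral_mono) (auto simp: fw indicator_def intro: ennreal_leI)
  also have "\<dots> = ennreal w * emeasure lborel A"
    using assms(3) by (simp add: nn_integral_cmult_indicator)
  finally show ?thesis .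
qed

lemma abc_anti:
  assumes A: "assumption_ABC n p w u P" and i: "i \<in> {1..n}" and v: "v \<in> unit_sphere p"
    and r: "r \<ge> 0"
  shows "0 < (\<integral>X. (inner_p p v (X i))\<^sup>2 \<partial>P)"
    "measure P {X\<in>space P. \<bar>inner_p p v (X i)\<bar> \<le> r * sqrt (\<integral>X. (inner_p p v (X i))\<^sup>2 \<partial>P)} \<le> 2 * w * r"
proof -
  interpret prob_space P using abc_prob[OF A] .
  let ?Y = "\<lambda>X. inner_p p v (X i)"
  define \<sigma> where "\<sigma> = sqrt (\<integral>X. (?Y X)\<^sup>2 \<partial>P)"
  let ?Z = "\<lambda>X. ?Y X / \<sigma>"
  obtain f where f: "\<And>y. 0 \<le> f y \<and> f y \<le> w" "distributed P lborel ?Z (\<lambda>y. ennreal (f y))"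
    using A i v unfolding assumption_ABC_def \<sigma>_def by blast
  have w0: "0 \<le> w" using f(1)[of 0] by simp
  have E0: "0 \<le> (\<integral>X. (?Y X)\<^sup>2 \<partial>P)" by simp
  have sig0: "\<sigma> > 0"
  proof (rule ccontr)
    assume "\<not> \<sigma> > 0"
    then have "\<sigma> = 0" using E0 by (simp add: \<sigma>_def)
    then have "?Z -` {0} \<inter> space P = space P" by auto
    then have "emeasure P (space P) \<le> ennreal w * emeasure lborel {0::real}"
      using density_bound[OF f(2), of w "{0}"] f(1) w0 by auto
    then show False by (simp add: emeasure_space_1)
  qed
  then show "0 < (\<integral>X. (inner_p p v (X i))\<^sup>2 \<partial>P)" by (simp add: \<sigma>_def)
  have set_eq: "{X\<in>space P. \<bar>?Y X\<bar> \<le> r * \<sigma>} = ?Z -` {-r..r} \<inter> space P"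
    using sig0 by (auto simp: abs_le_iff field_simps)
  have "emeasure P (?Z -` {-r..r} \<inter> space P) \<le> ennreal w * emeasure lborel {-r..r}"
    using density_bound[OF f(2), of w "{-r..r}"] f(1) w0 by auto
  also have "\<dots> = ennreal (2 * w * r)" using r w0 by (simp add: ennreal_mult[symmetric] mult_ac)
  finally have "emeasure P {X\<in>space P. \<bar>?Y X\<bar> \<le> r * \<sigma>} \<le> ennreal (2 * w * r)"
    unfolding set_eq .
  then show "measure P {X\<in>space P. \<bar>inner_p p v (X i)\<bar> \<le> r * sqrt (\<integral>X. (inner_p p v (X i))\<^sup>2 \<partial>P)} \<le> 2 * w * r"
    unfolding \<sigma>_def[symmetric] using r w0 by (simp add: emeasure_eq_measure ennreal_le_iff)
qed

lemma abc_coord_sq_int: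
  assumes A: "assumption_ABC n p w u P" and i: "i \<in> {1..n}" and j: "j < p"
  shows "integrable P (\<lambda>X. (X i j)\<^sup>2)"
proof -
  have "integrable P (\<lambda>X. (inner_p p (evec j) (X i))\<^sup>2)"
    using A i evec_unit[OF j] by (simp add: assumption_ABC_def)
  then show ?thesis using j by (simp add: inner_evec)
qed

lemma abc_prod_int:
  assumes A: "assumption_ABC n p w u P" and i: "i \<in> {1..n}" and j: "j < p" and k: "k < p"
  shows "integrable P (\<lambda>X. X i j * X i k)"
proof (rule Bochner_Integration.integrable_bound)
  show "integrable P (\<lambda>X. (X i j)\<^sup>2 + (X i k)\<^sup>2)"
    using abc_coord_sq_int[OF A i j] abc_coord_sq_int[OF A i k] by simp
  show "(\<lambda>X. X i j * X i k) \<in> borel_measurable P" using A i by measurable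
  show "AE x in P. norm (x i j * x i k) \<le> norm ((x i j)\<^sup>2 + (x i k)\<^sup>2)"
  proof (rule AE_I2)
    fix x :: data
    have "0 \<le> (\<bar>x i j\<bar> - \<bar>x i k\<bar>)\<^sup>2" by simp
    then have "\<bar>x i j * x i k\<bar> \<le> (x i j)\<^sup>2 + (x i k)\<^sup>2"
      by (simp add: power2_eq_square abs_mult algebra_simps)
         (smt (verit) abs_ge_zero mult_nonneg_nonneg)
    then show "norm (x i j * x i k) \<le> norm ((x i j)\<^sup>2 + (x i k)\<^sup>2)" by simp
  qed
qed

lemma abc_cov:
  assumes A: "assumption_ABC n p w u P" and i: "i \<in> {1..n}" and j: "j < p" and k: "k < p"
  shows "(\<integral>X. X i j * X i k \<partial>P) = cov_mat P i j k"
  using A i j k by (simp add: cov_mat_def assumption_ABC_def)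

lemma abc_second_moment:
  assumes A: "assumption_ABC n p w u P" and i: "i \<in> {1..n}"
  shows "(\<integral>X. (inner_p p v (X i))\<^sup>2 \<partial>P) = quad_form p (cov_mat P i) v"
proof -
  have e: "(inner_p p v (X i))\<^sup>2 = (\<Sum>j<p. \<Sum>k<p. v j * (X i j * X i k) * v k)" for X :: data
    by (simp add: inner_p_def power2_eq_square sum_product mult_ac)
  have "(\<integral>X. (inner_p p v (X i))\<^sup>2 \<partial>P) = (\<Sum>j<p. \<Sum>k<p. v j * (\<integral>X. X i j * X i k \<partial>P) * v k)"
  proof -
    have int: "integrable P (\<lambda>X. v j * (X i j * X i k) * v k)" if "j < p" "k < p" for j k
      using abc_prod_int[OF A i that] by simp
    have "(\<integral>X. (\<Sum>j<p. \<Sum>k<p. v j * (X i j * X i k) * v k) \<partial>P) =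
        (\<Sum>j<p. \<integral>X. (\<Sum>k<p. v j * (X i j * X i k) * v k) \<partial>P)"
      by (rule Bochner_Integration.integral_sum) (use int in auto)
    also have "\<dots> = (\<Sum>j<p. \<Sum>k<p. \<integral>X. v j * (X i j * X i k) * v k \<partial>P)"
      by (intro sum.cong refl Bochner_Integration.integral_sum) (use int in auto)
    finally show ?thesis unfolding e by simp
  qed
  also have "\<dots> = quad_form p (cov_mat P i) v"
    unfolding quad_form_def by (intro sum.cong refl) (simp add: abc_cov[OF A i])
  finally show ?thesis .
qed

lemma ln2_ge_half: "1 / 2 \<le> ln (2::real)"
proof -
  have "exp (1 / 2 :: real) ^ 2 = exp 1" by (simp add: exp_of_nat_mult[symmetric])
  also have "\<dots> \<le> 3" using exp_le by simp
  finally have "exp (1 / 2 :: real) ^ 2 \<le> 2 ^ 2" by simp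
  then have "exp (1 / 2 :: real) \<le> 2" by (rule power2_le_imp_le) simp
  then show ?thesis using ln_ge_iff[of 2 "1/2"] by simp
qed

lemma T_grid_le:
  assumes "1 \<le> n" "t \<in> T_grid n"
  shows "1 \<le> t \<and> 2 * t \<le> n"
proof -
  obtain k where t: "t = 2 ^ k" and k: "int k \<le> \<lfloor>log 2 (real n / 2)\<rfloor>"
    using assms(2) by (auto simp: T_grid_def)
  have "real k \<le> log 2 (real n / 2)" using k by (simp add: le_floor_iff)
  then have "2 powr real k \<le> real n / 2" using assms(1) by (simp add: le_log_iff)
  then have "2 ^ k \<le> real n / 2" by (simp add: powr_realpow)
  then have "real (2 * t) \<le> real n" by (simp add: t)
  then show ?thesis using t by (simp del: of_nat_mult)
qed

lemma T_grid_mem: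
  assumes "2 * 2 ^ k \<le> n"
  shows "(2::nat) ^ k \<in> T_grid n"
proof -
  have "1 \<le> (2::nat) ^ k" by simp
  then have n: "1 \<le> n" using assms by linarith
  have "real (2 * 2 ^ k) \<le> real n" using assms by (simp only: of_nat_le_iff)
  then have "2 powr real k \<le> real n / 2" by (simp add: powr_realpow)
  then have "real k \<le> log 2 (real n / 2)" using n by (simp add: le_log_iff)
  then have "int k \<le> \<lfloor>log 2 (real n / 2)\<rfloor>" by (simp add: le_floor_iff)
  then show ?thesis by (auto simp: T_grid_def)
qed

lemma S_grid_mem:
  assumes "2 ^ k \<le> p"
  shows "(2::nat) ^ k \<in> S_grid p"
proof -
  have "1 \<le> (2::nat) ^ k" by simp
  then have p: "1 \<le> p" using assms by linarith
  have "real (2 ^ k) \<le> real p" using assms by (simp only: of_nat_le_iff)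
  then have "2 powr real k \<le> real p" by (simp add: powr_realpow)
  then have "real k \<le> log 2 (real p)" using p by (simp add: le_log_iff)
  then have "int k \<le> \<lfloor>log 2 (real p)\<rfloor>" by (simp add: le_floor_iff)
  then show ?thesis by (auto simp: S_grid_def)
qed

lemma S_grid_ge1: "s \<in> S_grid p \<Longrightarrow> 1 \<le> s"
  by (auto simp: S_grid_def)

lemma pow2_floor:
  assumes "1 \<le> (m::nat)"
  shows "\<exists>k. 2 ^ k \<le> m \<and> m < 2 * 2 ^ k"
  using assms
proof (induction m rule: less_induct)
  case (less m)
  show ?case
  proof (cases "m < 2")
    case True then show ?thesis using less.prems by (intro exI[of _ 0]) auto
  next
    case False
    then have "1 \<le> m div 2" "m div 2 < m" by auto
    then obtain k where k: "2 ^ k \<le> m div 2" "m div 2 < 2 * 2 ^ k" using less.IH by blast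
    have d1: "m div 2 * 2 \<le> m" "m < m div 2 * 2 + 2" by auto
    have "2 ^ Suc k \<le> m" using k(1) d1 by simp
    moreover have "m < 2 * 2 ^ Suc k" using k(2) d1 by simp
    ultimately show ?thesis by blast
  qed
qed

lemma T_grid_card:
  assumes "2 \<le> n"
  shows "finite (T_grid n)" "real (card (T_grid n)) \<le> 2 * ln (8 * real n)"
proof -
  define K where "K = nat \<lfloor>log 2 (real n / 2)\<rfloor>"
  have sub: "T_grid n \<subseteq> (\<lambda>k. 2 ^ k) ` {..K}"
  proof
    fix t assume "t \<in> T_grid n"
    then obtain k where "t = 2 ^ k" "int k \<le> \<lfloor>log 2 (real n / 2)\<rfloor>" by (auto simp: T_grid_def)
    then show "t \<in> (\<lambda>k. 2 ^ k) ` {..K}" by (auto simp: K_def)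
  qed
  show "finite (T_grid n)" using sub finite_subset by blast
  have "card (T_grid n) \<le> card ((\<lambda>k. (2::nat) ^ k) ` {..K})" by (rule card_mono) (use sub in auto)
  also have "\<dots> \<le> card {..K}" by (rule card_image_le) simp
  finally have c: "card (T_grid n) \<le> K + 1" by simp
  have l0: "0 \<le> log 2 (real n / 2)" using assms by simp
  have "real K \<le> log 2 (real n / 2)" using l0 by (simp add: K_def)
  moreover have "real (card (T_grid n)) \<le> real (K + 1)" using c by (simp only: of_nat_le_iff)
  ultimately have "real (card (T_grid n)) \<le> log 2 (real n / 2) + 1" by linarith
  also have "\<dots> = log 2 (real n)" using assms by (simp add: log_divide)
  also have "\<dots> = ln (real n) / ln 2" by (simp add: log_def)
  also have "\<dots> \<le> 2 * ln (real n)"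
  proof -
    have "0 \<le> ln (real n)" using assms by simp
    then have "ln (real n) / ln 2 \<le> ln (real n) / (1 / 2)"
      using ln2_ge_half by (intro divide_left_mono) auto
    then show ?thesis by simp
  qed
  also have "\<dots> \<le> 2 * ln (8 * real n)" using assms by simp
  finally show "real (card (T_grid n)) \<le> 2 * ln (8 * real n)" .
qed

lemma g_ge1: "1 \<le> p \<Longrightarrow> 1 \<le> g_fun p n"
proof -
  assume p: "1 \<le> p"
  have "1 \<le> ln (exp 1 * real p)" using p by (simp add: ln_mult)
  then show ?thesis by (simp add: g_fun_def)
qed

lemma exp_m2ln:
  fixes y :: real
  assumes "0 < y" shows "exp (- 2 * ln y) = 1 / y\<^sup>2"
proof -
  have "exp (2 * ln y) = y ^ 2" using exp_of_nat_mult[of 2 "ln y"] assms by simp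
  then show ?thesis by (simp add: exp_minus divide_inverse)
qed

lemma exp_neg_g:
  assumes "1 \<le> p" "1 \<le> n"
  shows "exp (- 2 * g_fun p n) \<le> 1 / (exp 1 * real p)\<^sup>2"
    "exp (- 2 * g_fun p n) \<le> 1 / (ln (8 * real n))\<^sup>2"
proof -
  have ep: "0 < exp 1 * real p" using assms by simp
  have "exp (- 2 * g_fun p n) \<le> exp (- 2 * ln (exp 1 * real p))" by (simp add: g_fun_def)
  also have "\<dots> = 1 / (exp 1 * real p)\<^sup>2" by (rule exp_m2ln[OF ep])
  finally show "exp (- 2 * g_fun p n) \<le> 1 / (exp 1 * real p)\<^sup>2" .
  have l: "0 < ln (8 * real n)" using assms by simp
  have "exp (- 2 * g_fun p n) \<le> exp (- 2 * ln (ln (8 * real n)))" by (simp add: g_fun_def)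
  also have "\<dots> = 1 / (ln (8 * real n))\<^sup>2" by (rule exp_m2ln[OF l])
  finally show "exp (- 2 * g_fun p n) \<le> 1 / (ln (8 * real n))\<^sup>2" .
qed

lemma null_numeric:
  assumes p: "1 \<le> p" and n: "2 \<le> n" and ga: "4 \<le> \<gamma>" and c: "real c \<le> 2 * ln (8 * real n)"
  shows "real c * (real p * real p) * (2 * exp (- (\<gamma> * g_fun p n))) \<le> 4 * exp (- (\<gamma> - 4))"
proof -
  let ?g = "g_fun p n"
  have g1: "1 \<le> ?g" using g_ge1[OF p] .
  have ln8: "1 \<le> ln (8 * real n)"
  proof -
    have "exp 1 \<le> (8::real)" using exp_le by simp
    also have "8 \<le> 8 * real n" using n by simp
    finally show ?thesis using ln_ge_iff[of "8 * real n" 1] n by simp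
  qed
  have e3: "exp (- (\<gamma> * ?g)) = exp (- 2 * ?g) * exp (- 2 * ?g) * exp (- ((\<gamma> - 4) * ?g))"
    by (simp add: exp_add[symmetric] algebra_simps)
  have e4: "exp (- ((\<gamma> - 4) * ?g)) \<le> exp (- (\<gamma> - 4))"
  proof -
    have "(\<gamma> - 4) * 1 \<le> (\<gamma> - 4) * ?g" using ga g1 by (intro mult_left_mono) auto
    then show ?thesis by simp
  qed
  have "exp (- (\<gamma> * ?g)) \<le> 1 / (exp 1 * real p)\<^sup>2 * (1 / (ln (8 * real n))\<^sup>2) * exp (- (\<gamma> - 4))"
    unfolding e3 using exp_neg_g[OF p, of n] n e4
    by (intro mult_mono) auto
  then have "real c * (real p * real p) * (2 * exp (- (\<gamma> * ?g))) \<le>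
      (2 * ln (8 * real n)) * (real p * real p) * (2 * (1 / (exp 1 * real p)\<^sup>2 * (1 / (ln (8 * real n))\<^sup>2) * exp (- (\<gamma> - 4))))"
    using c by (intro mult_mono) auto
  also have "\<dots> = 4 * exp (- (\<gamma> - 4)) / (exp 1 ^ 2 * ln (8 * real n))"
    using p ln8 by (simp add: field_simps power2_eq_square)
  also have "\<dots> \<le> 4 * exp (- (\<gamma> - 4))"
  proof -
    have e1: "1 \<le> exp (1::real) ^ 2" by simp
    have "1 * 1 \<le> exp 1 ^ 2 * ln (8 * real n)" by (rule mult_mono[OF e1 ln8]) auto
    then have "1 \<le> exp 1 ^ 2 * ln (8 * real n)" by simp
    then show ?thesis by (simp add: divide_le_eq)
  qed
  finally show ?thesis .
qed

lemma integral_le_prob: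
  assumes P: "prob_space M" and B: "B \<in> sets M"
    and f: "\<And>x. x \<in> space M \<Longrightarrow> 0 \<le> f x \<and> f x \<le> indicator B x"
  shows "(\<integral>x. f x \<partial>M) \<le> measure M B"
proof (cases "integrable M f")
  case True
  interpret prob_space M by (rule P)
  have iB: "integrable M (indicat_real B)"
    by (rule integrable_real_indicator[OF B]) (simp add: less_top[symmetric])
  have "(\<integral>x. f x \<partial>M) \<le> (\<integral>x. indicator B x \<partial>M)"
    by (intro integral_mono True iB) (use B f in auto)
  also have "\<dots> = measure M B" using B by simp
  finally show ?thesis .
next
  case False
  then show ?thesis by (simp add: not_integrable_integral_eq)
qed

lemma exp_mid_le: "exp (((a::real) + b) / 2) \<le> (exp a + exp b) / 2"
proof -
  have "exp ((a + b) / 2) ^ 2 = exp a * exp b" by (simp add: exp_of_nat_mult[symmetric] exp_add[symmetric])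
  also have "\<dots> \<le> ((exp a + exp b) / 2) ^ 2"
  proof -
    have "0 \<le> (exp a - exp b) ^ 2" by simp
    then show ?thesis by (simp add: power2_eq_square field_simps)
  qed
  finally show ?thesis by (rule power2_le_imp_le) (simp add: add_pos_pos less_imp_le)
qed

lemma abc_coord_subg:
  assumes A: "assumption_ABC n p w u P" and i: "i \<in> {1..n}" and j: "j < p"
    and tau: "\<tau> > 0" "u * (\<integral>X. (X i j)\<^sup>2 \<partial>P) < \<tau>\<^sup>2"
  shows "integrable P (\<lambda>X. exp ((X i j)\<^sup>2 / \<tau>\<^sup>2))" "(\<integral>X. exp ((X i j)\<^sup>2 / \<tau>\<^sup>2) \<partial>P) \<le> 2"
  using abc_subg[OF A i evec_unit[OF j] tau(1)] tau(2) j by (simp_all add: inner_evec)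

lemma subexp_prod:
  assumes A: "assumption_ABC n p w u P" and i: "i \<in> {1..n}" and j: "j < p" and k: "k < p"
    and tau: "\<tau> > 0" "u * (\<integral>X. (X i j)\<^sup>2 \<partial>P) < \<tau>\<^sup>2" "u * (\<integral>X. (X i k)\<^sup>2 \<partial>P) < \<tau>\<^sup>2"
    and sg: "\<bar>\<sigma>\<bar> = 1"
  shows "integrable P (\<lambda>X. exp (\<bar>\<sigma> * (X i j * X i k)\<bar> / \<tau>\<^sup>2))"
    "(\<integral>X. exp (\<bar>\<sigma> * (X i j * X i k)\<bar> / \<tau>\<^sup>2) \<partial>P) \<le> 2"
proof -
  interpret prob_space P using abc_prob[OF A] .
  note sj = abc_coord_subg[OF A i j tau(1,2)]
  note sk = abc_coord_subg[OF A i k tau(1,3)]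
  have pt: "exp (\<bar>\<sigma> * (X i j * X i k)\<bar> / \<tau>\<^sup>2) \<le> (exp ((X i j)\<^sup>2 / \<tau>\<^sup>2) + exp ((X i k)\<^sup>2 / \<tau>\<^sup>2)) / 2" for X :: data
  proof -
    have "0 \<le> (\<bar>X i j\<bar> - \<bar>X i k\<bar>)\<^sup>2" by simp
    then have "\<bar>X i j * X i k\<bar> \<le> ((X i j)\<^sup>2 + (X i k)\<^sup>2) / 2"
      by (simp add: power2_eq_square abs_mult algebra_simps)
    then have "\<bar>\<sigma> * (X i j * X i k)\<bar> / \<tau>\<^sup>2 \<le> (((X i j)\<^sup>2 + (X i k)\<^sup>2) / 2) / \<tau>\<^sup>2"
      using sg by (intro divide_right_mono) (auto simp: abs_mult)
    also have "(((X i j)\<^sup>2 + (X i k)\<^sup>2) / 2) / \<tau>\<^sup>2 = ((X i j)\<^sup>2 / \<tau>\<^sup>2 + (X i k)\<^sup>2 / \<tau>\<^sup>2) / 2"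
      using tau(1) by (simp add: field_simps)
    finally have "\<bar>\<sigma> * (X i j * X i k)\<bar> / \<tau>\<^sup>2 \<le> ((X i j)\<^sup>2 / \<tau>\<^sup>2 + (X i k)\<^sup>2 / \<tau>\<^sup>2) / 2" .
    then have "exp (\<bar>\<sigma> * (X i j * X i k)\<bar> / \<tau>\<^sup>2) \<le> exp (((X i j)\<^sup>2 / \<tau>\<^sup>2 + (X i k)\<^sup>2 / \<tau>\<^sup>2) / 2)"
      by simp
    also have "\<dots> \<le> (exp ((X i j)\<^sup>2 / \<tau>\<^sup>2) + exp ((X i k)\<^sup>2 / \<tau>\<^sup>2)) / 2" by (rule exp_mid_le)
    finally show ?thesis .
  qed
  have ib: "integrable P (\<lambda>X. (exp ((X i j)\<^sup>2 / \<tau>\<^sup>2) + exp ((X i k)\<^sup>2 / \<tau>\<^sup>2)) / 2)"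
    using sj(1) sk(1) by simp
  show int: "integrable P (\<lambda>X. exp (\<bar>\<sigma> * (X i j * X i k)\<bar> / \<tau>\<^sup>2))"
    by (rule Bochner_Integration.integrable_bound[OF ib]) (use A i pt in \<open>auto\<close>)
  have "(\<integral>X. exp (\<bar>\<sigma> * (X i j * X i k)\<bar> / \<tau>\<^sup>2) \<partial>P) \<le>
      (\<integral>X. (exp ((X i j)\<^sup>2 / \<tau>\<^sup>2) + exp ((X i k)\<^sup>2 / \<tau>\<^sup>2)) / 2 \<partial>P)"
    by (rule integral_mono[OF int ib]) (rule pt)
  also have "\<dots> = ((\<integral>X. exp ((X i j)\<^sup>2 / \<tau>\<^sup>2) \<partial>P) + (\<integral>X. exp ((X i k)\<^sup>2 / \<tau>\<^sup>2) \<partial>P)) / 2"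
    using sj(1) sk(1) by simp
  also have "\<dots> \<le> 2" using sj(2) sk(2) by simp
  finally show "(\<integral>X. exp (\<bar>\<sigma> * (X i j * X i k)\<bar> / \<tau>\<^sup>2) \<partial>P) \<le> 2" .
qed

lemma anti_sum:
  assumes A: "assumption_ABC n p w u P" and I: "I \<subseteq> {1..n}" and j: "j < p"
    and s2: "0 < \<sigma>2" and E: "\<And>i. i \<in> I \<Longrightarrow> (\<integral>X. (X i j)\<^sup>2 \<partial>P) = \<sigma>2"
    and th: "\<theta> > 0" and r: "r \<ge> 0"
  shows "measure P {X\<in>space P. (\<Sum>i\<in>I. (X i j)\<^sup>2) \<le> real (card I) * \<sigma>2 / \<theta>}
     \<le> (exp 1 * (2 * w * r + exp (- \<theta> * r\<^sup>2))) ^ card I"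
proof -
  interpret prob_space P using abc_prob[OF A] .
  have finI: "finite I" using I finite_subset by blast
  let ?W = "\<lambda>i X. - ((X i j)\<^sup>2 / \<sigma>2)"
  have ind: "indep_vars (\<lambda>_. borel) (\<lambda>i X. (\<lambda>x. - ((x j)\<^sup>2 / \<sigma>2)) (X i)) I"
    by (rule abc_indep[OF A I]) simp
  have rvj: "i \<in> I \<Longrightarrow> (\<lambda>X. X i j) \<in> borel_measurable P" for i using abc_rv_coord[OF A] I by auto
  have each: "integrable P (\<lambda>X. exp (\<theta> * ?W i X)) \<and>
      (\<integral>X. exp (\<theta> * ?W i X) \<partial>P) \<le> 2 * w * r + exp (- \<theta> * r\<^sup>2)" if iI: "i \<in> I" for i
  proof -
    have i: "i \<in> {1..n}" using iI I by auto
    let ?B = "{X\<in>space P. \<bar>X i j\<bar> \<le> r * sqrt \<sigma>2}"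
    have B: "?B \<in> events" using rvj[OF iI] by measurable
    have mB: "measure P ?B \<le> 2 * w * r"
      using abc_anti(2)[OF A i evec_unit[OF j] r] j E[OF iI] by (simp add: inner_evec)
    have pt: "exp (\<theta> * ?W i X) \<le> indicator ?B X + exp (- \<theta> * r\<^sup>2)" if X: "X \<in> space P" for X
    proof (cases "X \<in> ?B")
      case True
      have e1: "exp (\<theta> * ?W i X) \<le> 1" using th s2 by simp
      have e2: "0 \<le> exp (- \<theta> * r\<^sup>2)" by simp
      have "indicator ?B X = (1::real)" using True by simp
      then show ?thesis using e1 e2 by linarith
    next
      case False
      then have "r * sqrt \<sigma>2 < \<bar>X i j\<bar>" using X by auto
      then have "(r * sqrt \<sigma>2)\<^sup>2 \<le> (\<bar>X i j\<bar>)\<^sup>2" using r s2 by (intro power_mono) auto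
      then have "r\<^sup>2 * \<sigma>2 \<le> (X i j)\<^sup>2" using s2 by (simp add: power_mult_distrib)
      then have "r\<^sup>2 \<le> (X i j)\<^sup>2 / \<sigma>2" using s2 by (simp add: field_simps)
      then have "\<theta> * r\<^sup>2 \<le> \<theta> * ((X i j)\<^sup>2 / \<sigma>2)" using th by (intro mult_left_mono) auto
      then have e: "exp (\<theta> * ?W i X) \<le> exp (- \<theta> * r\<^sup>2)" by simp
      have "0 \<le> indicat_real ?B X" by simp
      then show ?thesis using e by linarith
    qed
    have ib: "integrable P (\<lambda>X. indicator ?B X + exp (- \<theta> * r\<^sup>2))"
      using B by (intro Bochner_Integration.integrable_add integrable_real_indicator) (auto simp: less_top[symmetric])
    have int: "integrable P (\<lambda>X. exp (\<theta> * ?W i X))"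
      by (rule Bochner_Integration.integrable_bound[OF ib]) (use rvj[OF iI] pt in \<open>auto\<close>)
    have "(\<integral>X. exp (\<theta> * ?W i X) \<partial>P) \<le> (\<integral>X. indicator ?B X + exp (- \<theta> * r\<^sup>2) \<partial>P)"
      by (rule integral_mono_AE[OF int ib]) (use pt in auto)
    also have "\<dots> = measure P ?B + exp (- \<theta> * r\<^sup>2)"
      using B by (simp add: Bochner_Integration.integral_add integrable_real_indicator less_top[symmetric] prob_space)
    also have "\<dots> \<le> 2 * w * r + exp (- \<theta> * r\<^sup>2)" using mB by simp
    finally show ?thesis using int by simp
  qed
  have "measure P {X\<in>space P. - real (card I) / \<theta> \<le> (\<Sum>i\<in>I. ?W i X)} \<le>
      exp (- \<theta> * (- real (card I) / \<theta>)) * (\<Prod>i\<in>I. \<integral>X. exp (\<theta> * ?W i X) \<partial>P)"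
    by (rule chernoff_prod[OF prob_space_axioms finI ind th]) (use each in auto)
  also have "\<dots> \<le> exp (real (card I)) * (2 * w * r + exp (- \<theta> * r\<^sup>2)) ^ card I"
  proof -
    have "(\<Prod>i\<in>I. \<integral>X. exp (\<theta> * ?W i X) \<partial>P) \<le> (\<Prod>i\<in>I. 2 * w * r + exp (- \<theta> * r\<^sup>2))"
      by (rule prod_mono) (use each in \<open>auto intro: integral_nonneg_AE\<close>)
    then show ?thesis using th by (simp add: mult_left_mono)
  qed
  also have "\<dots> = (exp 1 * (2 * w * r + exp (- \<theta> * r\<^sup>2))) ^ card I"
    by (simp add: power_mult_distrib exp_of_nat_mult[symmetric])
  finally have main: "measure P {X\<in>space P. - real (card I) / \<theta> \<le> (\<Sum>i\<in>I. ?W i X)} \<le>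
      (exp 1 * (2 * w * r + exp (- \<theta> * r\<^sup>2))) ^ card I" .
  have "{X\<in>space P. (\<Sum>i\<in>I. (X i j)\<^sup>2) \<le> real (card I) * \<sigma>2 / \<theta>} =
        {X\<in>space P. - real (card I) / \<theta> \<le> (\<Sum>i\<in>I. ?W i X)}"
  proof -
    have "(\<Sum>i\<in>I. ?W i X) = - (\<Sum>i\<in>I. (X i j)\<^sup>2) / \<sigma>2" for X :: data
      by (simp add: sum_negf sum_divide_distrib)
    moreover have "(S \<le> c * \<sigma>2 / \<theta>) \<longleftrightarrow> (- c / \<theta> \<le> - S / \<sigma>2)" for S c :: real
      using s2 th by (simp add: field_simps)
    ultimately show ?thesis by auto
  qed
  then show ?thesis using main by simp
qed

lemma upper_sum:
  assumes A: "assumption_ABC n p w u P" and I: "I \<subseteq> {1..n}" and j: "j < p"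
    and M: "0 < M" and u: "0 < u" and E: "\<And>i. i \<in> I \<Longrightarrow> (\<integral>X. (X i j)\<^sup>2 \<partial>P) \<le> M"
  shows "measure P {X\<in>space P. real (card I) * a * M \<le> (\<Sum>i\<in>I. (X i j)\<^sup>2)}
     \<le> exp (- real (card I) * a / (2 * u)) * 2 ^ card I"
proof -
  interpret prob_space P using abc_prob[OF A] .
  have finI: "finite I" using I finite_subset by blast
  define \<tau> where "\<tau> = sqrt (2 * u * M)"
  have t0: "\<tau> > 0" using u M by (simp add: \<tau>_def)
  have t2: "\<tau>\<^sup>2 = 2 * u * M" using u M by (simp add: \<tau>_def)
  have ind: "indep_vars (\<lambda>_. borel) (\<lambda>i X. (\<lambda>x. (x j)\<^sup>2) (X i)) I"
    by (rule abc_indep[OF A I]) simp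
  have each: "integrable P (\<lambda>X. exp ((1 / (2 * u * M)) * (X i j)\<^sup>2)) \<and>
      (\<integral>X. exp ((1 / (2 * u * M)) * (X i j)\<^sup>2) \<partial>P) \<le> 2" if iI: "i \<in> I" for i
  proof -
    have i: "i \<in> {1..n}" using iI I by auto
    have "u * (\<integral>X. (X i j)\<^sup>2 \<partial>P) \<le> u * M" using E[OF iI] u by (intro mult_left_mono) auto
    also have "\<dots> < \<tau>\<^sup>2" using u M t2 by simp
    finally have lt: "u * (\<integral>X. (X i j)\<^sup>2 \<partial>P) < \<tau>\<^sup>2" .
    show ?thesis using abc_coord_subg[OF A i j t0 lt] t2 by (simp add: field_simps)
  qed
  have s: "1 / (2 * u * M) > 0" using u M by simp
  have "measure P {X\<in>space P. real (card I) * a * M \<le> (\<Sum>i\<in>I. (X i j)\<^sup>2)} \<le>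
      exp (- (1 / (2 * u * M)) * (real (card I) * a * M)) * (\<Prod>i\<in>I. \<integral>X. exp ((1 / (2 * u * M)) * (X i j)\<^sup>2) \<partial>P)"
    by (rule chernoff_prod[OF prob_space_axioms finI ind s]) (use each in auto)
  also have "\<dots> \<le> exp (- (1 / (2 * u * M)) * (real (card I) * a * M)) * 2 ^ card I"
  proof -
    have "(\<Prod>i\<in>I. \<integral>X. exp ((1 / (2 * u * M)) * (X i j)\<^sup>2) \<partial>P) \<le> (\<Prod>i\<in>I. 2)"
      by (rule prod_mono) (use each in \<open>auto intro: integral_nonneg_AE\<close>)
    then show ?thesis by (simp add: mult_left_mono)
  qed
  also have "- (1 / (2 * u * M)) * (real (card I) * a * M) = - real (card I) * a / (2 * u)"
    using M u by (simp add: field_simps)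
  finally show ?thesis .
qed

lemma quad_dev:
  assumes A: "assumption_ABC n p w u P" and I: "I \<subseteq> {1..n}" and v: "v \<in> unit_sphere p"
    and M: "0 < M" and u: "0 < u" and E: "\<And>i. i \<in> I \<Longrightarrow> (\<integral>X. (inner_p p v (X i))\<^sup>2 \<partial>P) \<le> M"
    and x: "x \<ge> 0"
  shows "measure P {X\<in>space P. 50 * (2 * u * M) * (sqrt (x * real (card I)) + x)
     \<le> \<bar>\<Sum>i\<in>I. ((inner_p p v (X i))\<^sup>2 - (\<integral>Y. (inner_p p v (Y i))\<^sup>2 \<partial>P))\<bar>} \<le> 2 * exp (- x)"
proof -
  interpret prob_space P using abc_prob[OF A] .
  have finI: "finite I" using I finite_subset by blast
  define \<tau> where "\<tau> = sqrt (2 * u * M)"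
  have t0: "\<tau> > 0" using u M by (simp add: \<tau>_def)
  have t2: "\<tau>\<^sup>2 = 2 * u * M" using u M by (simp add: \<tau>_def)
  have ind: "indep_vars (\<lambda>_. borel) (\<lambda>i X. (\<lambda>x. (inner_p p v x)\<^sup>2) (X i)) I"
    by (rule abc_indep[OF A I]) simp
  have K: "2 * u * M > 0" using u M by simp
  have m: "integrable P (\<lambda>X. exp (\<bar>(inner_p p v (X i))\<^sup>2\<bar> / (2 * u * M))) \<and>
     (\<integral>X. exp (\<bar>(inner_p p v (X i))\<^sup>2\<bar> / (2 * u * M)) \<partial>P) \<le> 2" if iI: "i \<in> I" for i
  proof -
    have i: "i \<in> {1..n}" using iI I by auto
    have "u * (\<integral>X. (inner_p p v (X i))\<^sup>2 \<partial>P) \<le> u * M" using E[OF iI] u by (intro mult_left_mono) auto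
    also have "\<dots> < \<tau>\<^sup>2" using u M t2 by simp
    finally have lt: "u * (\<integral>X. (inner_p p v (X i))\<^sup>2 \<partial>P) < \<tau>\<^sup>2" .
    show ?thesis using abc_subg[OF A i v t0 lt] t2 by simp
  qed
  show ?thesis
    using bernstein[OF prob_space_axioms finI ind K _ _ x] m by auto
qed

lemma entry_dev:
  assumes A: "assumption_ABC n p w u P" and j: "j < p" and k: "k < p"
    and t: "1 \<le> t" "2 * t \<le> n" and S: "0 < \<sigma>m" and u: "0 < u"
    and Ej: "\<And>i. i \<in> {1..n} \<Longrightarrow> (\<integral>X. (X i j)\<^sup>2 \<partial>P) \<le> \<sigma>m"
    and Ek: "\<And>i. i \<in> {1..n} \<Longrightarrow> (\<integral>X. (X i k)\<^sup>2 \<partial>P) \<le> \<sigma>m"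
    and x: "x \<ge> 0"
  shows "measure P {X\<in>space P. 50 * (2 * u * \<sigma>m) * (sqrt (x * real (2 * t)) + x)
     \<le> \<bar>\<Sum>i\<in>{1..t} \<union> {n - t + 1..n}. ((if i \<le> t then 1 else -1) * (X i j * X i k)
          - (\<integral>Y. (if i \<le> t then 1 else -1) * (Y i j * Y i k) \<partial>P))\<bar>} \<le> 2 * exp (- x)"
proof -
  interpret prob_space P using abc_prob[OF A] .
  let ?I = "{1..t} \<union> {n - t + 1..n}"
  have I: "?I \<subseteq> {1..n}" using t by auto
  have disj: "{1..t} \<inter> {n - t + 1..n} = {}" using t by auto
  have c2: "card {n - t + 1..n} = t" using t by simp
  have c1: "card {1..t} = t" by simp
  have "card ?I = card {1..t} + card {n - t + 1..n}" by (rule card_Un_disjoint[OF _ _ disj]) auto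
  then have cI: "card ?I = 2 * t" unfolding c1 c2 by simp
  define \<tau> where "\<tau> = sqrt (2 * u * \<sigma>m)"
  have t0: "\<tau> > 0" using u S by (simp add: \<tau>_def)
  have t2: "\<tau>\<^sup>2 = 2 * u * \<sigma>m" using u S by (simp add: \<tau>_def)
  have ind: "indep_vars (\<lambda>_. borel) (\<lambda>i X. (\<lambda>x. (if i \<le> t then 1 else -1) * (x j * x k)) (X i)) ?I"
    by (rule abc_indep[OF A I]) simp
  have K: "2 * u * \<sigma>m > 0" using u S by simp
  have m: "integrable P (\<lambda>X. exp (\<bar>(if i \<le> t then 1 else -1) * (X i j * X i k)\<bar> / (2 * u * \<sigma>m))) \<and>
     (\<integral>X. exp (\<bar>(if i \<le> t then 1 else -1) * (X i j * X i k)\<bar> / (2 * u * \<sigma>m)) \<partial>P) \<le> 2"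
    if iI: "i \<in> ?I" for i
  proof -
    have i: "i \<in> {1..n}" using iI I by auto
    have lt: "u * (\<integral>X. (X i l)\<^sup>2 \<partial>P) < \<tau>\<^sup>2" if "(\<integral>X. (X i l)\<^sup>2 \<partial>P) \<le> \<sigma>m" for l
    proof -
      have "u * (\<integral>X. (X i l)\<^sup>2 \<partial>P) \<le> u * \<sigma>m" using that u by (intro mult_left_mono) auto
      also have "\<dots> < \<tau>\<^sup>2" using u S t2 by simp
      finally show ?thesis .
    qed
    have sg: "\<bar>(if i \<le> t then 1 else -1 :: real)\<bar> = 1" by simp
    show ?thesis using subexp_prod[OF A i j k t0 lt[OF Ej[OF i]] lt[OF Ek[OF i]] sg] t2 by simp
  qed
  show ?thesis
    using bernstein[OF prob_space_axioms _ ind K _ _ x] m cI by auto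
qed

definition sgn_t :: "nat \<Rightarrow> nat \<Rightarrow> real" where
  "sgn_t t i = (if i \<le> t then 1 else -1)"

lemma entry_identity:
  assumes t: "2 * t \<le> n"
  shows "real t * (Sigma_hat_1 X t j k - Sigma_hat_2 n X t j k) =
     (\<Sum>i\<in>{1..t} \<union> {n - t + 1..n}. (if i \<le> t then 1 else -1) * (X i j * X i k))"
proof -
  have disj: "{1..t} \<inter> {n - t + 1..n} = {}" using t by auto
  have "(\<Sum>i\<in>{1..t} \<union> {n - t + 1..n}. (if i \<le> t then 1 else -1) * (X i j * X i k)) =
      (\<Sum>i\<in>{1..t}. (if i \<le> t then 1 else -1) * (X i j * X i k)) +
      (\<Sum>i\<in>{n - t + 1..n}. (if i \<le> t then 1 else -1) * (X i j * X i k))"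
    by (rule sum.union_disjoint[OF _ _ disj]) auto
  also have "(\<Sum>i\<in>{1..t}. (if i \<le> t then 1 else -1) * (X i j * X i k)) = (\<Sum>i\<in>{1..t}. X i j * X i k)"
    by (intro sum.cong refl) auto
  also have "(\<Sum>i\<in>{n - t + 1..n}. (if i \<le> t then 1 else -1) * (X i j * X i k)) =
      - (\<Sum>i\<in>{n - t + 1..n}. X i j * X i k)"
    using t by (simp add: sum_negf[symmetric]) (intro sum.cong refl, auto)
  also have "(\<Sum>i\<in>{n - t + 1..n}. X i j * X i k) = (\<Sum>i\<in>{1..t}. X (n - i + 1) j * X (n - i + 1) k)"
    using t by (subst sum_rev_index[where f="\<lambda>i. X i j * X i k"]) auto
  finally have sumeq: "(\<Sum>i\<in>{1..t} \<union> {n - t + 1..n}. (if i \<le> t then 1 else -1) * (X i j * X i k)) =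
     (\<Sum>i\<in>{1..t}. X i j * X i k) + - (\<Sum>i\<in>{1..t}. X (n - i + 1) j * X (n - i + 1) k)" .
  have S1: "Sigma_hat_1 X t j k = (1 / real t) * (\<Sum>i\<in>{1..t}. X i j * X i k)"
    by (simp add: Sigma_hat_1_def)
  have S2: "Sigma_hat_2 n X t j k = (1 / real t) * (\<Sum>i\<in>{1..t}. X (n - i + 1) j * X (n - i + 1) k)"
    by (simp add: Sigma_hat_2_def)
  show ?thesis
  proof (cases "t = 0")
    case True then show ?thesis using sumeq by simp
  next
    case False
    then show ?thesis unfolding sumeq S1 S2 by (simp add: right_diff_distrib)
  qed
qed

lemma dev_arith:
  fixes t :: nat and \<gamma> g c :: real
  assumes t: "1 \<le> t" and ga: "1 \<le> \<gamma>" and g: "0 \<le> g" and c: "0 \<le> c"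
  shows "c * (sqrt (\<gamma> * g * real (2 * t)) + \<gamma> * g) / real t
     \<le> 3 * \<gamma> * c * max (sqrt (g / real t)) (g / real t)"
proof -
  let ?m = "max (sqrt (g / real t)) (g / real t)"
  have t0: "0 < real t" using t by simp
  have "sqrt (\<gamma> * g * real (2 * t)) / real t = sqrt (2 * \<gamma>) * sqrt (g / real t)"
  proof -
    have e: "\<gamma> * g * real (2 * t) = (2 * \<gamma>) * (g / real t) * (real t)\<^sup>2"
      using t0 by (simp add: power2_eq_square field_simps)
    have "sqrt (\<gamma> * g * real (2 * t)) = sqrt (2 * \<gamma>) * sqrt (g / real t) * sqrt ((real t)\<^sup>2)"
      unfolding e by (simp only: real_sqrt_mult)
    then have "sqrt (\<gamma> * g * real (2 * t)) = sqrt (2 * \<gamma>) * sqrt (g / real t) * real t" by simp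
    then show ?thesis using t0 by simp
  qed
  also have "\<dots> \<le> 2 * \<gamma> * ?m"
  proof -
    have "sqrt (2 * \<gamma>) \<le> 2 * \<gamma>"
    proof -
      have "2 * \<gamma> \<le> (2 * \<gamma>)\<^sup>2" using ga by (simp add: power2_eq_square)
      then have "sqrt (2 * \<gamma>) \<le> sqrt ((2 * \<gamma>)\<^sup>2)" by (rule real_sqrt_le_mono)
      also have "sqrt ((2 * \<gamma>)\<^sup>2) = 2 * \<gamma>" using ga by (simp only: real_sqrt_abs abs_of_nonneg)
      finally show ?thesis .
    qed
    moreover have "sqrt (g / real t) \<le> ?m" by simp
    ultimately show ?thesis using ga g by (intro mult_mono) auto
  qed
  finally have h1: "sqrt (\<gamma> * g * real (2 * t)) / real t \<le> 2 * \<gamma> * ?m" .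
  have "\<gamma> * (g / real t) \<le> \<gamma> * ?m" using ga by (intro mult_left_mono) auto
  then have h2: "\<gamma> * g / real t \<le> \<gamma> * ?m" by simp
  have "c * (sqrt (\<gamma> * g * real (2 * t)) + \<gamma> * g) / real t =
      c * (sqrt (\<gamma> * g * real (2 * t)) / real t + \<gamma> * g / real t)"
    by (simp only: add_divide_distrib times_divide_eq_right distrib_left)
  also have "\<dots> \<le> c * (2 * \<gamma> * ?m + \<gamma> * ?m)" using h1 h2 c by (intro mult_left_mono) auto
  finally show ?thesis by (simp add: algebra_simps)
qed

lemma L_bounds:
  assumes p: "1 \<le> p" and n: "ln (exp 1 * real p) \<le> real n"
  shows "1 \<le> nat \<lceil>ln (exp 1 * real p)\<rceil>" "nat \<lceil>ln (exp 1 * real p)\<rceil> \<le> n"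
    "ln (exp 1 * real p) \<le> real (nat \<lceil>ln (exp 1 * real p)\<rceil>)"
proof -
  have l1: "1 \<le> ln (exp 1 * real p)" using p by (simp add: ln_mult)
  then show "1 \<le> nat \<lceil>ln (exp 1 * real p)\<rceil>" by linarith
  show "nat \<lceil>ln (exp 1 * real p)\<rceil> \<le> n" using n by linarith
  have c0: "0 \<le> \<lceil>ln (exp 1 * real p)\<rceil>" using l1 by linarith
  have "real (nat \<lceil>ln (exp 1 * real p)\<rceil>) = real_of_int \<lceil>ln (exp 1 * real p)\<rceil>"
    using c0 by simp
  then show "ln (exp 1 * real p) \<le> real (nat \<lceil>ln (exp 1 * real p)\<rceil>)" by simp
qed

definition r0 :: "real \<Rightarrow> real \<Rightarrow> real" where "r0 \<delta> w = \<delta> / (128 * w)"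
definition th0 :: "real \<Rightarrow> real \<Rightarrow> real" where "th0 \<delta> w = ln (64 / \<delta>) / (r0 \<delta> w)\<^sup>2"
definition ga0 :: "real \<Rightarrow> real" where "ga0 \<delta> = 4 + ln (64 / \<delta>)"
definition lamN :: "real \<Rightarrow> real \<Rightarrow> real \<Rightarrow> real" where "lamN \<delta> w u = 300 * u * ga0 \<delta> * th0 \<delta> w"

lemma consts_pos:
  assumes "0 < \<delta>" "\<delta> < 1" "0 < w" "0 < u"
  shows "0 < r0 \<delta> w" "0 < th0 \<delta> w" "4 \<le> ga0 \<delta>" "0 < lamN \<delta> w u" "0 < ln (64 / \<delta>)"
proof -
  show r: "0 < r0 \<delta> w" using assms by (simp add: r0_def)
  have "1 < 64 / \<delta>" using assms by (simp add: field_simps)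
  then show l: "0 < ln (64 / \<delta>)" by (rule ln_gt_zero)
  show t: "0 < th0 \<delta> w" using r l by (simp add: th0_def)
  show g: "4 \<le> ga0 \<delta>" using l by (simp add: ga0_def)
  show "0 < lamN \<delta> w u" using t g assms by (simp add: lamN_def)
qed

lemma anti_bound:
  assumes "0 < \<delta>" "\<delta> < 1" "0 < w" "1 \<le> L"
  shows "(exp 1 * (2 * w * r0 \<delta> w + exp (- th0 \<delta> w * (r0 \<delta> w)\<^sup>2))) ^ L \<le> 3 * \<delta> / 32"
proof -
  note c = consts_pos[OF assms(1,2,3), of 1]
  have e1: "2 * w * r0 \<delta> w = \<delta> / 64" using assms by (simp add: r0_def)
  have "th0 \<delta> w * (r0 \<delta> w)\<^sup>2 = ln (64 / \<delta>)" using c(1) by (simp add: th0_def)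
  then have e2: "exp (- th0 \<delta> w * (r0 \<delta> w)\<^sup>2) = \<delta> / 64"
    using assms by (simp add: exp_minus exp_ln)
  define q where "q = exp 1 * (2 * w * r0 \<delta> w + exp (- th0 \<delta> w * (r0 \<delta> w)\<^sup>2))"
  have q: "q = exp 1 * (\<delta> / 32)" unfolding q_def e1 e2 by simp
  have "exp (1::real) \<le> 3" using exp_le by simp
  then have q3: "q \<le> 3 * \<delta> / 32" unfolding q using assms by (simp add: mult_right_mono)
  have q0: "0 \<le> q" unfolding q using assms by simp
  have q1: "q \<le> 1" using q3 assms by simp
  have "q ^ L \<le> q ^ 1" by (rule power_decreasing[OF assms(4) q0 q1])
  then have "q ^ L \<le> 3 * \<delta> / 32" using q3 by simp
  then show ?thesis by (simp only: q_def)
qed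

lemma abc_meas_all:
  assumes "assumption_ABC n p w u P"
  shows "(\<lambda>X. X i j) \<in> borel_measurable P"
proof -
  have s: "sets P = sets borel" using assms by (simp add: assumption_ABC_def)
  have b: "(\<lambda>X::data. X i j) \<in> borel_measurable borel"
    by (rule measurable_product_then_coordinatewise[OF measurable_product_coordinates])
  have "measurable P (borel :: real measure) = measurable borel borel" by (rule measurable_cong_sets[OF s refl])
  then show ?thesis using b by simp
qed

lemma null_bound:
  assumes N: "null_model n p w u P" and p: "1 \<le> p" and n: "2 \<le> n"
    and nL: "ln (exp 1 * real p) \<le> real n"
    and d: "0 < \<delta>" "\<delta> < 1" and w: "0 < w" and u: "0 < u" and lam: "lamN \<delta> w u \<le> lam"
  shows "(\<integral>X. psi_adaptive n p lam X \<partial>P) \<le> \<delta> / 4"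
proof -
  have A: "assumption_ABC n p w u P" using N by (simp add: null_model_def)
  interpret prob_space P using abc_prob[OF A] .
  note meas[measurable] = abc_meas_all[OF A]
  obtain \<Sigma> where Sig: "\<forall>i\<in>{1..n}. \<forall>j<p. \<forall>k<p. cov_mat P i j k = \<Sigma> j k"
    using N by (auto simp: null_model_def)
  have Ejk: "(\<integral>X. X i j * X i k \<partial>P) = \<Sigma> j k" if "i \<in> {1..n}" "j < p" "k < p" for i j k
    using abc_cov[OF A that] Sig that by simp
  have Ejj: "(\<integral>X. (X i j)\<^sup>2 \<partial>P) = \<Sigma> j j" if "i \<in> {1..n}" "j < p" for i j
    using Ejk[OF that that(2)] by (simp add: power2_eq_square)
  obtain jm where jm: "jm < p" "\<forall>j<p. \<Sigma> j j \<le> \<Sigma> jm jm"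
  proof -
    let ?m = "Max ((\<lambda>j. \<Sigma> j j) ` {..<p})"
    have fin: "finite ((\<lambda>j. \<Sigma> j j) ` {..<p})" "(\<lambda>j. \<Sigma> j j) ` {..<p} \<noteq> {}" using p by (auto simp: lessThan_empty_iff)
    obtain j0 where "j0 < p" "\<Sigma> j0 j0 = ?m" using Max_in[OF fin] by auto
    moreover have "\<forall>j<p. \<Sigma> j j \<le> ?m" using Max_ge[OF fin(1)] by auto
    ultimately show ?thesis using that by auto
  qed
  define \<sigma>2 where "\<sigma>2 = \<Sigma> jm jm"
  have n1: "1 \<in> {1..n}" using n by simp
  have s2pos: "0 < \<sigma>2"
    using abc_anti(1)[OF A n1 evec_unit[OF jm(1)] order_refl] jm(1) Ejj[OF n1 jm(1)]
    by (simp add: inner_evec \<sigma>2_def)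
  define L where "L = nat \<lceil>ln (exp 1 * real p)\<rceil>"
  have L1: "1 \<le> L" and Ln: "L \<le> n" using L_bounds[OF p nL] by (simp_all add: L_def)
  define g where "g = g_fun p n"
  have g1: "1 \<le> g" using g_ge1[OF p] by (simp add: g_def)
  define \<gamma> where "\<gamma> = ga0 \<delta>"
  define \<theta> where "\<theta> = th0 \<delta> w"
  note cp = consts_pos[OF d w u]
  have ga4: "4 \<le> \<gamma>" and th: "0 < \<theta>" using cp by (simp_all add: \<gamma>_def \<theta>_def)
  define T where "T = T_grid n"
  have Tfin: "finite T" and Tcard: "real (card T) \<le> 2 * ln (8 * real n)"
    using T_grid_card[OF n] by (simp_all add: T_def)
  have Tt: "1 \<le> t \<and> 2 * t \<le> n" if "t \<in> T" for t using T_grid_le[of n t] that n by (simp add: T_def)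
  define a where "a t = 50 * (2 * u * \<sigma>2) * (sqrt (\<gamma> * g * real (2 * t)) + \<gamma> * g)" for t :: nat
  define B1 where "B1 = {X\<in>space P. (\<Sum>i\<in>{1..L}. (X i jm)\<^sup>2) \<le> real (card {1..L}) * \<sigma>2 / \<theta>}"
  define B2 where "B2 = {X\<in>space P. (\<Sum>i\<in>{n - L + 1..n}. (X i jm)\<^sup>2) \<le> real (card {n - L + 1..n}) * \<sigma>2 / \<theta>}"
  define B3 where "B3 = (\<lambda>(t, j, k). {X\<in>space P. a t \<le> \<bar>\<Sum>i\<in>{1..t} \<union> {n - t + 1..n}.
      ((if i \<le> t then 1 else -1) * (X i j * X i k) - (\<integral>Y. (if i \<le> t then 1 else -1) * (Y i j * Y i k) \<partial>P))\<bar>})"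
  define IDX where "IDX = T \<times> {..<p} \<times> {..<p}"
  define Bad where "Bad = B1 \<union> B2 \<union> (\<Union>x\<in>IDX. B3 x)"
  have B1m: "B1 \<in> events" unfolding B1_def by measurable
  have B2m: "B2 \<in> events" unfolding B2_def by measurable
  have B3m: "B3 x \<in> events" for x unfolding B3_def by (cases x) (simp, measurable)
  have IDXfin: "finite IDX" using Tfin by (simp add: IDX_def)
  have B3Um: "(\<Union>x\<in>IDX. B3 x) \<in> events" using IDXfin B3m by auto
  have Badm: "Bad \<in> events" unfolding Bad_def using B1m B2m B3Um by auto
  have mB1: "measure P B1 \<le> 3 * \<delta> / 32"
  proof -
    have "measure P B1 \<le> (exp 1 * (2 * w * r0 \<delta> w + exp (- \<theta> * (r0 \<delta> w)\<^sup>2))) ^ card {1..L}"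
      unfolding B1_def
      by (rule anti_sum[OF A _ jm(1) s2pos _ th]) (use Ln Ejj jm(1) cp in \<open>auto simp: \<sigma>2_def\<close>)
    also have "\<dots> \<le> 3 * \<delta> / 32" using anti_bound[OF d w, of "card {1..L}"] L1 by (simp add: \<theta>_def)
    finally show ?thesis .
  qed
  have mB2: "measure P B2 \<le> 3 * \<delta> / 32"
  proof -
    have "measure P B2 \<le> (exp 1 * (2 * w * r0 \<delta> w + exp (- \<theta> * (r0 \<delta> w)\<^sup>2))) ^ card {n - L + 1..n}"
      unfolding B2_def
      by (rule anti_sum[OF A _ jm(1) s2pos _ th]) (use Ln L1 Ejj jm(1) cp in \<open>auto simp: \<sigma>2_def\<close>)
    also have "\<dots> \<le> 3 * \<delta> / 32" using anti_bound[OF d w, of "card {n - L + 1..n}"] L1 Ln by (simp add: \<theta>_def)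
    finally show ?thesis .
  qed
  have mB3x: "measure P (B3 x) \<le> 2 * exp (- (\<gamma> * g))" if x: "x \<in> IDX" for x
  proof -
    obtain t j k where x3: "x = (t, j, k)" "t \<in> T" "j < p" "k < p" using x by (auto simp: IDX_def)
    have t: "1 \<le> t" "2 * t \<le> n" using Tt[OF x3(2)] by auto
    have Eb: "(\<integral>X. (X i l)\<^sup>2 \<partial>P) \<le> \<sigma>2" if "i \<in> {1..n}" "l < p" for i l
      using Ejj[OF that] jm(2) that(2) by (simp add: \<sigma>2_def)
    have "0 \<le> \<gamma> * g" using ga4 g1 by simp
    from entry_dev[OF A x3(3) x3(4) t s2pos u _ _ this] Eb x3(3,4)
    show ?thesis by (simp add: B3_def x3(1) a_def)
  qed
  have mB3: "measure P (\<Union>x\<in>IDX. B3 x) \<le> \<delta> / 16"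
  proof -
    have "measure P (\<Union>x\<in>IDX. B3 x) \<le> (\<Sum>x\<in>IDX. measure P (B3 x))"
      by (rule measure_UNION_le[OF IDXfin]) (use B3m in auto)
    also have "\<dots> \<le> (\<Sum>x\<in>IDX. 2 * exp (- (\<gamma> * g)))" by (rule sum_mono) (rule mB3x)
    also have "\<dots> = real (card T) * (real p * real p) * (2 * exp (- (\<gamma> * g_fun p n)))"
      by (simp add: IDX_def card_cartesian_product g_def)
    also have "\<dots> \<le> 4 * exp (- (\<gamma> - 4))" by (rule null_numeric[OF p n ga4 Tcard])
    also have "\<dots> = \<delta> / 16"
    proof -
      have "exp (- (\<gamma> - 4)) = \<delta> / 64" using d by (simp add: \<gamma>_def ga0_def exp_minus exp_ln)
      then show ?thesis by simp
    qed
    finally show ?thesis .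
  qed
  have mBad: "measure P Bad \<le> \<delta> / 4"
  proof -
    have "measure P Bad \<le> measure P (B1 \<union> B2) + measure P (\<Union>x\<in>IDX. B3 x)"
      unfolding Bad_def by (rule measure_Un_le) (use B1m B2m B3Um in auto)
    also have "measure P (B1 \<union> B2) \<le> measure P B1 + measure P B2" by (rule measure_Un_le[OF B1m B2m])
    finally show ?thesis using mB1 mB2 mB3 by simp
  qed
  have good: "psi_adaptive n p lam X = 0" if X: "X \<in> space P" "X \<notin> Bad" for X
  proof -
    have XB1: "X \<notin> B1" and XB2: "X \<notin> B2" and XB3: "\<And>x. x \<in> IDX \<Longrightarrow> X \<notin> B3 x"
      using X by (auto simp: Bad_def)
    have Lpos: "0 < real L" using L1 by simp
    have d1: "\<sigma>2 / \<theta> < Sigma_hat_1 X L jm jm"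
    proof -
      have "real L * \<sigma>2 / \<theta> < (\<Sum>i\<in>{1..L}. (X i jm)\<^sup>2)" using XB1 X(1) by (auto simp: B1_def)
      then show ?thesis using Lpos by (simp add: Sigma_hat_diag field_simps)
    qed
    have d2: "\<sigma>2 / \<theta> < Sigma_hat_2 n X L jm jm"
    proof -
      have cL: "card {n - L + 1..n} = L" using Ln L1 by simp
      have "real L * \<sigma>2 / \<theta> < (\<Sum>i\<in>{n - L + 1..n}. (X i jm)\<^sup>2)" using XB2 X(1) cL by (auto simp: B2_def)
      also have "(\<Sum>i\<in>{n - L + 1..n}. (X i jm)\<^sup>2) = (\<Sum>i\<in>{1..L}. (X (n - i + 1) jm)\<^sup>2)"
        by (rule sum_rev_index[symmetric, OF Ln])
      finally show ?thesis using Lpos by (simp add: Sigma_hat_2_diag field_simps)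
    qed
    have sig: "\<sigma>2 / \<theta> \<le> sigma2_con n p X"
    proof -
      have h1: "\<bar>Sigma_hat_1 X L jm jm\<bar> \<le> lam_hat_s p 1 (Sigma_hat_1 X L)" by (rule lam_hat_diag[OF p order_refl jm(1)])
      have h2: "\<bar>Sigma_hat_2 n X L jm jm\<bar> \<le> lam_hat_s p 1 (Sigma_hat_2 n X L)" by (rule lam_hat_diag[OF p order_refl jm(1)])
      have "\<sigma>2 / \<theta> \<le> lam_hat_s p 1 (Sigma_hat_1 X L)"
        using d1 h1 abs_ge_self[of "Sigma_hat_1 X L jm jm"] by linarith
      moreover have "\<sigma>2 / \<theta> \<le> lam_hat_s p 1 (Sigma_hat_2 n X L)"
        using d2 h2 abs_ge_self[of "Sigma_hat_2 n X L jm jm"] by linarith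
      ultimately show ?thesis by (simp add: sigma2_con_def L_def[symmetric])
    qed
    have noS: "\<not> (lam * sigma2_con n p X * h_fun p n s t < S_hat n p X t s)" if ts: "t \<in> T" "s \<in> S_grid p" for t s
    proof -
      have t: "1 \<le> t" "2 * t \<le> n" using Tt[OF ts(1)] by auto
      have s1: "1 \<le> s" using S_grid_ge1[OF ts(2)] .
      let ?m = "max (sqrt (g / real t)) (g / real t)"
      have m0: "0 \<le> ?m" using g1 by (simp add: le_max_iff_disj)
      have entry: "\<bar>Sigma_hat_1 X t j k - Sigma_hat_2 n X t j k\<bar> \<le> 300 * u * \<gamma> * \<sigma>2 * ?m"
        if jk: "j < p" "k < p" for j k
      proof -
        have "(t, j, k) \<in> IDX" using ts jk by (simp add: IDX_def)
        then have nb: "\<not> a t \<le> \<bar>\<Sum>i\<in>{1..t} \<union> {n - t + 1..n}.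
            ((if i \<le> t then 1 else -1) * (X i j * X i k) - (\<integral>Y. (if i \<le> t then 1 else -1) * (Y i j * Y i k) \<partial>P))\<bar>"
          using XB3 X(1) by (auto simp: B3_def)
        have disj: "{1..t} \<inter> {n - t + 1..n} = {}" using t by auto
        have Ez: "(\<Sum>i\<in>{1..t} \<union> {n - t + 1..n}. (\<integral>Y. (if i \<le> t then 1 else -1) * (Y i j * Y i k) \<partial>P)) = 0"
        proof -
          have "(\<Sum>i\<in>{1..t} \<union> {n - t + 1..n}. (\<integral>Y. (if i \<le> t then 1 else -1) * (Y i j * Y i k) \<partial>P)) =
              (\<Sum>i\<in>{1..t}. (\<integral>Y. (if i \<le> t then 1 else -1) * (Y i j * Y i k) \<partial>P)) +
              (\<Sum>i\<in>{n - t + 1..n}. (\<integral>Y. (if i \<le> t then 1 else -1) * (Y i j * Y i k) \<partial>P))"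
            by (rule sum.union_disjoint[OF _ _ disj]) auto
          also have "(\<Sum>i\<in>{1..t}. (\<integral>Y. (if i \<le> t then 1 else -1) * (Y i j * Y i k) \<partial>P)) = (\<Sum>i\<in>{1..t}. \<Sigma> j k)"
            by (intro sum.cong refl) (use t jk Ejk in auto)
          also have "(\<Sum>i\<in>{n - t + 1..n}. (\<integral>Y. (if i \<le> t then 1 else -1) * (Y i j * Y i k) \<partial>P)) = (\<Sum>i\<in>{n - t + 1..n}. - \<Sigma> j k)"
            by (intro sum.cong refl) (use t jk Ejk in auto)
          finally show ?thesis using t by simp
        qed
        have "real t * \<bar>Sigma_hat_1 X t j k - Sigma_hat_2 n X t j k\<bar> < a t"
        proof -
          have "\<bar>\<Sum>i\<in>{1..t} \<union> {n - t + 1..n}.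
            ((if i \<le> t then 1 else -1) * (X i j * X i k) - (\<integral>Y. (if i \<le> t then 1 else -1) * (Y i j * Y i k) \<partial>P))\<bar>
            = \<bar>real t * (Sigma_hat_1 X t j k - Sigma_hat_2 n X t j k)\<bar>"
            by (simp only: sum_subtractf Ez entry_identity[OF t(2)] diff_zero)
          then show ?thesis using nb t by (simp add: abs_mult)
        qed
        then have "\<bar>Sigma_hat_1 X t j k - Sigma_hat_2 n X t j k\<bar> \<le> a t / real t"
          using t by (simp add: field_simps)
        also have "a t / real t \<le> 3 * \<gamma> * (50 * (2 * u * \<sigma>2)) * ?m"
          unfolding a_def by (rule dev_arith) (use t ga4 g1 u s2pos in auto)
        finally show ?thesis by (simp add: mult_ac)
      qed
      have "S_hat n p X t s \<le> real s * (300 * u * \<gamma> * \<sigma>2 * ?m)"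
        unfolding S_hat_def by (rule lam_hat_le[OF p s1]) (use entry in auto)
      also have "\<dots> = (lamN \<delta> w u * (\<sigma>2 / \<theta>)) * (real s * ?m)"
        using th by (simp add: lamN_def \<gamma>_def \<theta>_def field_simps)
      also have "\<dots> \<le> (lam * sigma2_con n p X) * (real s * ?m)"
        using lam sig cp th s2pos m0 by (intro mult_right_mono mult_mono) auto
      also have "\<dots> = lam * sigma2_con n p X * h_fun p n s t" by (simp add: h_fun_def g_def)
      finally show ?thesis by simp
    qed
    show ?thesis unfolding psi_adaptive_def using noS by (auto simp: T_def)
  qed
  have "(\<integral>X. psi_adaptive n p lam X \<partial>P) \<le> measure P Bad"
  proof (rule integral_le_prob[OF prob_space_axioms Badm])
    fix X assume "X \<in> space P"
    then show "0 \<le> psi_adaptive n p lam X \<and> psi_adaptive n p lam X \<le> indicator Bad X"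
      using good[of X] by (cases "X \<in> Bad") (auto simp: psi_adaptive_def)
  qed
  then show ?thesis using mBad by simp
qed

definition x0c :: "real \<Rightarrow> real" where "x0c \<delta> = ln (64 / \<delta>)"
definition aUc :: "real \<Rightarrow> real \<Rightarrow> real" where "aUc \<delta> u = 2 * u * (ln 2 + 2 + ln (32 / \<delta>))"
definition Calt :: "real \<Rightarrow> real \<Rightarrow> real \<Rightarrow> real" where
  "Calt \<delta> u lam = 2 * (800 * u * x0c \<delta> + 8 * lam * aUc \<delta> u)\<^sup>2 + 2"

lemma key_ineq:
  fixes M D s g t m K u x0 lam aU :: real
  assumes M: "0 < M" and D: "0 \<le> D" and s: "1 \<le> s" and g: "1 \<le> g" and t: "0 < t"
    and m: "m < 2 * t" "0 < m"
    and K: "K = 800 * u * x0 + 8 * lam * aU" and nn: "0 \<le> u" "0 \<le> x0" "0 \<le> lam" "0 \<le> aU"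
    and hyp: "(2 * K\<^sup>2 + 2) * s\<^sup>2 * g \<le> m * (D / M)\<^sup>2"
  shows "100 * u * M * x0 / sqrt t + lam * aU * M * s * sqrt (g / t) \<le> D / 8"
proof -
  have K0: "0 \<le> K" using K nn by simp
  have h1: "(2 * K\<^sup>2 + 2) * s\<^sup>2 * g * M\<^sup>2 \<le> m * D\<^sup>2"
    using hyp M by (simp add: power_divide field_simps)
  have "(K * s * sqrt g * M)\<^sup>2 = K\<^sup>2 * s\<^sup>2 * g * M\<^sup>2" using g by (simp add: power_mult_distrib)
  also have "\<dots> \<le> ((2 * K\<^sup>2 + 2) * s\<^sup>2 * g * M\<^sup>2) / 2"
    using s g M by (simp add: field_simps)
  also have "\<dots> \<le> m * D\<^sup>2 / 2" using h1 by simp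
  also have "\<dots> \<le> t * D\<^sup>2"
  proof -
    have "m * D\<^sup>2 \<le> (2 * t) * D\<^sup>2" by (rule mult_right_mono) (use m in auto)
    then show ?thesis by simp
  qed
  also have "\<dots> = (sqrt t * D)\<^sup>2" using t by (simp add: power_mult_distrib)
  finally have "(K * s * sqrt g * M)\<^sup>2 \<le> (sqrt t * D)\<^sup>2" .
  then have kD: "K * s * sqrt g * M \<le> sqrt t * D"
    by (rule power2_le_imp_le) (use t D in simp)
  have g1: "1 \<le> sqrt g" using g by simp
  have "1 * 1 \<le> s * sqrt g" by (rule mult_mono[OF s g1]) (use s in auto)
  then have sg1: "1 \<le> s * sqrt g" by simp
  have st: "0 < sqrt t" using t by simp
  have "100 * u * M * x0 / sqrt t + lam * aU * M * s * sqrt (g / t) =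
      (100 * u * x0 * M + lam * aU * (s * sqrt g) * M) / sqrt t"
    using st by (simp add: real_sqrt_divide field_simps)
  also have "\<dots> \<le> (100 * u * x0 * (s * sqrt g) * M + lam * aU * (s * sqrt g) * M) / sqrt t"
  proof -
    have "100 * u * x0 * M * 1 \<le> 100 * u * x0 * M * (s * sqrt g)"
      by (rule mult_left_mono[OF sg1]) (use nn M in simp)
    then have "100 * u * x0 * M + lam * aU * (s * sqrt g) * M \<le> 100 * u * x0 * (s * sqrt g) * M + lam * aU * (s * sqrt g) * M"
      by (simp add: mult_ac)
    then show ?thesis using st by (intro divide_right_mono) auto
  qed
  also have "\<dots> = (K * s * sqrt g * M) / (8 * sqrt t)" using st by (simp add: K field_simps)
  also have "\<dots> \<le> (sqrt t * D) / (8 * sqrt t)" using kD st by (intro divide_right_mono) auto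
  also have "\<dots> = D / 8" using st by simp
  finally show ?thesis .
qed

lemma alt_numeric:
  assumes p: "1 \<le> p" and L: "1 \<le> L" "ln (exp 1 * real p) \<le> real L" and d: "0 < \<delta>" "\<delta> < 1" and u: "0 < u"
  shows "real p * (exp (- real L * aUc \<delta> u / (2 * u)) * 2 ^ L) \<le> \<delta> / 32"
proof -
  have e: "exp (- real L * aUc \<delta> u / (2 * u)) * 2 ^ L = (2 * exp (- (aUc \<delta> u / (2 * u)))) ^ L"
    by (simp add: power_mult_distrib exp_of_nat_mult[symmetric] mult_ac)
  have a: "aUc \<delta> u / (2 * u) = ln 2 + 2 + ln (32 / \<delta>)" using u by (simp add: aUc_def)
  have e1: "2 * exp (- (aUc \<delta> u / (2 * u))) = exp (- 2) * (\<delta> / 32)"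
    unfolding a using d by (simp add: exp_minus exp_add exp_diff field_simps)
  have e2: "exp (- real L * aUc \<delta> u / (2 * u)) * 2 ^ L = exp (- 2) ^ L * (\<delta> / 32) ^ L"
    unfolding e e1 by (rule power_mult_distrib)
  have "(\<delta> / 32) ^ L \<le> (\<delta> / 32) ^ 1" using d L by (intro power_decreasing) auto
  then have b1: "(\<delta> / 32) ^ L \<le> \<delta> / 32" by simp
  have "exp (- 2) ^ L = exp (- 2 * real L)" by (simp add: exp_of_nat_mult[symmetric] mult_ac)
  also have "\<dots> \<le> exp (- 2 * ln (exp 1 * real p))" using L by simp
  also have "\<dots> = 1 / (exp 1 * real p)\<^sup>2" using p by (intro exp_m2ln) simp
  finally have b2: "exp (- 2) ^ L \<le> 1 / (exp 1 * real p)\<^sup>2" .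
  have "real p * (exp (- 2) ^ L * (\<delta> / 32) ^ L) \<le> real p * (1 / (exp 1 * real p)\<^sup>2 * (\<delta> / 32))"
    using b1 b2 d by (intro mult_left_mono mult_mono) auto
  also have "\<dots> = (\<delta> / 32) / (exp 1 ^ 2 * real p)" using p by (simp add: field_simps power2_eq_square)
  also have "\<dots> \<le> \<delta> / 32"
  proof -
    have "1 \<le> exp (1::real) ^ 2" by simp
    then have "1 * 1 \<le> exp 1 ^ 2 * real p" using p by (intro mult_mono) auto
    then show ?thesis using d by (simp add: divide_le_eq field_simps mult_left_mono[of 1, simplified])
  qed
  finally show ?thesis unfolding e2 .
qed

lemma alt_bound:
  assumes Alt: "alt_model n p w u t0 \<Sigma>1 \<Sigma>2 P" and p: "1 \<le> p"
    and nL: "ln (exp 1 * real p) \<le> real n"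
    and d: "0 < \<delta>" "\<delta> < 1" and w: "0 < w" and u: "0 < u" and lam: "0 \<le> lam"
    and s: "s \<in> {1..p}"
    and hyp: "real (min t0 (n - t0)) *
         (lam_max_s p s (\<lambda>j k. \<Sigma>1 j k - \<Sigma>2 j k) /
          max (lam_max_s p s \<Sigma>1) (lam_max_s p s \<Sigma>2))\<^sup>2
        \<ge> Calt \<delta> u lam * (real s)\<^sup>2 * g_fun p n"
  shows "(\<integral>X. 1 - psi_adaptive n p lam X \<partial>P) \<le> 3 * \<delta> / 32"
proof -
  have A: "assumption_ABC n p w u P" and t0: "t0 \<in> {1..n - 1}"
    and pd1: "pos_def_p p \<Sigma>1" and pd2: "pos_def_p p \<Sigma>2"
    and cov: "\<forall>i\<in>{1..n}. \<forall>j<p. \<forall>k<p. cov_mat P i j k = (if i \<le> t0 then \<Sigma>1 j k else \<Sigma>2 j k)"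
    using Alt by (auto simp: alt_model_def)
  interpret prob_space P using abc_prob[OF A] .
  note meas[measurable] = abc_meas_all[OF A]
  have s1: "1 \<le> s" "s \<le> p" using s by auto
  define M where "M = max (lam_max_s p s \<Sigma>1) (lam_max_s p s \<Sigma>2)"
  define D where "D = lam_max_s p s (\<lambda>j k. \<Sigma>1 j k - \<Sigma>2 j k)"
  have M0: "0 < M" using lam_max_pos[OF p s1(1) pd1] by (simp add: M_def)
  have DM: "D \<le> M" using lam_max_diff_le[OF p s1(1) pd1 pd2] by (simp add: D_def M_def)
  have D0: "0 \<le> D" using lam_max_diag[of 0 p s "\<lambda>j k. \<Sigma>1 j k - \<Sigma>2 j k"] p s1 by (simp add: D_def)
  define g where "g = g_fun p n"
  have g1: "1 \<le> g" using g_ge1[OF p] by (simp add: g_def)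
  define m where "m = min t0 (n - t0)"
  have n2: "2 \<le> n" using t0 by auto
  have m1: "1 \<le> m" and mt0: "m \<le> t0" and mn: "m \<le> n - t0" using t0 by (auto simp: m_def)
  define x0 where "x0 = x0c \<delta>"
  define aU where "aU = aUc \<delta> u"
  define Cc where "Cc = Calt \<delta> u lam"
  have x01: "1 \<le> x0"
  proof -
    have "exp 1 \<le> (64::real)" using exp_le by simp
    also have "64 \<le> 64 / \<delta>" using d by (simp add: field_simps)
    finally show ?thesis using d by (simp add: x0_def x0c_def ln_ge_iff)
  qed
  have aU0: "0 \<le> aU"
  proof -
    have "0 < ln (32 / \<delta>)" using d by (intro ln_gt_zero) (simp add: field_simps)
    then show ?thesis using u by (simp add: aU_def aUc_def)
  qed
  have Cc: "Cc = 2 * (800 * u * x0 + 8 * lam * aU)\<^sup>2 + 2" by (simp add: Cc_def Calt_def x0_def aU_def)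
  have Cc2: "2 \<le> Cc" unfolding Cc by simp
  have hyp': "Cc * (real s)\<^sup>2 * g \<le> real m * (D / M)\<^sup>2" using hyp by (simp add: Cc_def g_def m_def D_def M_def)
  have DM1: "(D / M)\<^sup>2 \<le> 1" using D0 DM M0 by (simp add: power_le_one)
  have mCg: "Cc * g \<le> real m"
  proof -
    have "Cc * g * 1 \<le> Cc * g * (real s)\<^sup>2" using s1 Cc2 g1 by (intro mult_left_mono) auto
    also have "\<dots> \<le> real m * (D / M)\<^sup>2" using hyp' by (simp add: mult_ac)
    also have "\<dots> \<le> real m * 1" using DM1 by (intro mult_left_mono) auto
    finally show ?thesis by simp
  qed
  have Dpos: "0 < D"
  proof (rule ccontr)
    assume "\<not> 0 < D" then have "D = 0" using D0 by simp
    then have "Cc * (real s)\<^sup>2 * g \<le> 0" using hyp' by simp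
    moreover have "0 < Cc * (real s)\<^sup>2 * g" using Cc2 s1 g1 by simp
    ultimately show False by simp
  qed
  obtain v where v: "v \<in> sparse_sphere p s" and vD: "D / 2 < \<bar>quad_form p (\<lambda>j k. \<Sigma>1 j k - \<Sigma>2 j k) v\<bar>"
    using lam_max_approx[OF p s1(1)] Dpos by (auto simp: D_def)
  have vu: "v \<in> unit_sphere p" using v by (simp add: sparse_sphere_def)
  define a1 where "a1 = quad_form p \<Sigma>1 v"
  define a2 where "a2 = quad_form p \<Sigma>2 v"
  have a1M: "a1 \<le> M" using lam_max_ge[OF v, of \<Sigma>1] pos_def_nonneg[OF pd1, of v] by (simp add: a1_def M_def)
  have a2M: "a2 \<le> M" using lam_max_ge[OF v, of \<Sigma>2] pos_def_nonneg[OF pd2, of v] by (simp add: a2_def M_def)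
  have a12: "D / 2 < \<bar>a1 - a2\<bar>" using vD by (simp add: quad_form_diff a1_def a2_def)
  have qcov: "quad_form p (cov_mat P i) v = (if i \<le> t0 then a1 else a2)" if i: "i \<in> {1..n}" for i
    unfolding quad_form_def a1_def a2_def using cov i by (auto intro!: sum.cong)
  have Ev: "(\<integral>X. (inner_p p v (X i))\<^sup>2 \<partial>P) = (if i \<le> t0 then a1 else a2)" if i: "i \<in> {1..n}" for i
    using abc_second_moment[OF A i] qcov[OF i] by simp
  have Exx: "(\<integral>X. (X i j)\<^sup>2 \<partial>P) \<le> M" if i: "i \<in> {1..n}" and j: "j < p" for i j
  proof -
    have "(\<integral>X. (X i j)\<^sup>2 \<partial>P) = cov_mat P i j j" using abc_cov[OF A i j j] by (simp add: power2_eq_square)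
    also have "\<dots> = (if i \<le> t0 then \<Sigma>1 j j else \<Sigma>2 j j)" using cov i j by auto
    also have "\<dots> \<le> M" using lam_max_diag[OF j s1(1), of \<Sigma>1] lam_max_diag[OF j s1(1), of \<Sigma>2]
      by (auto simp: M_def)
    finally show ?thesis .
  qed
  obtain k where k: "2 ^ k \<le> m" "m < 2 * 2 ^ k" using pow2_floor[OF m1] by blast
  define t where "t = (2::nat) ^ k"
  have t1: "1 \<le> t" and tm: "t \<le> m" and mt: "m < 2 * t" using k by (auto simp: t_def)
  have tT: "t \<in> T_grid n" unfolding t_def by (rule T_grid_mem) (use k mt0 mn in \<open>simp add: t_def\<close>)
  obtain k' where k': "2 ^ k' \<le> s" "s < 2 * 2 ^ k'" using pow2_floor[OF s1(1)] by blast
  define s' where "s' = (2::nat) ^ k'"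
  have s'S: "s' \<in> S_grid p" unfolding s'_def by (rule S_grid_mem) (use k' s1 in simp)
  have s'1: "1 \<le> s'" and s's: "s' \<le> s" using k' by (auto simp: s'_def)
  have "s + 1 \<le> 2 * s'" using k' by (simp add: s'_def)
  then have "real (s + 1) \<le> real (2 * s')" by (simp only: of_nat_le_iff)
  then have s's2: "real s + 1 \<le> 2 * real s'" by simp
  define L where "L = nat \<lceil>ln (exp 1 * real p)\<rceil>"
  have L1: "1 \<le> L" and Ln: "L \<le> n" and lnL: "ln (exp 1 * real p) \<le> real L"
    using L_bounds[OF p nL] by (simp_all add: L_def)
  define BU where "BU j = {X\<in>space P. real (card {1..L}) * aU * M \<le> (\<Sum>i\<in>{1..L}. (X i j)\<^sup>2)}" for j
  define BQ1 where "BQ1 = {X\<in>space P. 50 * (2 * u * M) * (sqrt (x0 * real (card {1..t})) + x0)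
     \<le> \<bar>\<Sum>i\<in>{1..t}. ((inner_p p v (X i))\<^sup>2 - (\<integral>Y. (inner_p p v (Y i))\<^sup>2 \<partial>P))\<bar>}"
  define BQ2 where "BQ2 = {X\<in>space P. 50 * (2 * u * M) * (sqrt (x0 * real (card {n - t + 1..n})) + x0)
     \<le> \<bar>\<Sum>i\<in>{n - t + 1..n}. ((inner_p p v (X i))\<^sup>2 - (\<integral>Y. (inner_p p v (Y i))\<^sup>2 \<partial>P))\<bar>}"
  define Bad where "Bad = (\<Union>j\<in>{..<p}. BU j) \<union> BQ1 \<union> BQ2"
  have BUm: "BU j \<in> events" for j unfolding BU_def by measurable
  have BQ1m: "BQ1 \<in> events" unfolding BQ1_def inner_p_def by measurable
  have BQ2m: "BQ2 \<in> events" unfolding BQ2_def inner_p_def by measurable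
  have BUUm: "(\<Union>j\<in>{..<p}. BU j) \<in> events" using BUm by auto
  have Badm: "Bad \<in> events" unfolding Bad_def using BUUm BQ1m BQ2m by auto
  have mBU: "measure P (\<Union>j\<in>{..<p}. BU j) \<le> \<delta> / 32"
  proof -
    have "measure P (\<Union>j\<in>{..<p}. BU j) \<le> (\<Sum>j\<in>{..<p}. measure P (BU j))"
      by (rule measure_UNION_le) (use BUm in auto)
    also have "\<dots> \<le> (\<Sum>j\<in>{..<p}. exp (- real L * aU / (2 * u)) * 2 ^ L)"
    proof (rule sum_mono)
      fix j assume j: "j \<in> {..<p}"
      have "measure P (BU j) \<le> exp (- real (card {1..L}) * aU / (2 * u)) * 2 ^ card {1..L}"
        unfolding BU_def by (rule upper_sum[OF A _ _ M0 u]) (use Ln j Exx in auto)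
      then show "measure P (BU j) \<le> exp (- real L * aU / (2 * u)) * 2 ^ L" by simp
    qed
    also have "\<dots> = real p * (exp (- real L * aUc \<delta> u / (2 * u)) * 2 ^ L)" by (simp add: aU_def)
    also have "\<dots> \<le> \<delta> / 32" by (rule alt_numeric[OF p L1 lnL d u])
    finally show ?thesis .
  qed
  have ex0: "2 * exp (- x0) = \<delta> / 32" using d by (simp add: x0_def x0c_def exp_minus exp_ln)
  have mBQ1: "measure P BQ1 \<le> \<delta> / 32"
  proof -
    have "measure P BQ1 \<le> 2 * exp (- x0)"
      unfolding BQ1_def by (rule quad_dev[OF A _ vu M0 u]) (use tm mt0 mn t1 Ev a1M a2M x01 in auto)
    then show ?thesis using ex0 by simp
  qed
  have mBQ2: "measure P BQ2 \<le> \<delta> / 32"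
  proof -
    have "measure P BQ2 \<le> 2 * exp (- x0)"
      unfolding BQ2_def by (rule quad_dev[OF A _ vu M0 u]) (use tm mt0 mn t1 Ev a1M a2M x01 in auto)
    then show ?thesis using ex0 by simp
  qed
  have mBad: "measure P Bad \<le> 3 * \<delta> / 32"
  proof -
    have "measure P Bad \<le> measure P ((\<Union>j\<in>{..<p}. BU j) \<union> BQ1) + measure P BQ2"
      unfolding Bad_def by (rule measure_Un_le) (use BUUm BQ1m BQ2m in auto)
    also have "measure P ((\<Union>j\<in>{..<p}. BU j) \<union> BQ1) \<le> measure P (\<Union>j\<in>{..<p}. BU j) + measure P BQ1"
      by (rule measure_Un_le[OF BUUm BQ1m])
    finally show ?thesis using mBU mBQ1 mBQ2 by simp
  qed
  have rej: "psi_adaptive n p lam X = 1" if X: "X \<in> space P" "X \<notin> Bad" for X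
  proof -
    have XU: "\<And>j. j < p \<Longrightarrow> X \<notin> BU j" and XQ1: "X \<notin> BQ1" and XQ2: "X \<notin> BQ2"
      using X by (auto simp: Bad_def)
    have Lpos: "0 < real L" using L1 by simp
    have diag: "Sigma_hat_1 X L j j < aU * M" if j: "j < p" for j
    proof -
      have "(\<Sum>i\<in>{1..L}. (X i j)\<^sup>2) < real L * aU * M" using XU[OF j] X(1) by (auto simp: BU_def)
      then show ?thesis using Lpos by (simp add: Sigma_hat_diag field_simps)
    qed
    have sigU: "sigma2_con n p X \<le> aU * M"
    proof -
      have "lam_hat_s p 1 (Sigma_hat_1 X L) \<le> real 1 * (aU * M)"
      proof (rule lam_hat_le[OF p order_refl], intro allI impI)
        fix j k assume jk: "j < p" "k < p"
        have "\<bar>Sigma_hat_1 X L j k\<bar> \<le> (Sigma_hat_1 X L j j + Sigma_hat_1 X L k k) / 2" by (rule Sigma_hat_offdiag)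
        then show "\<bar>Sigma_hat_1 X L j k\<bar> \<le> aU * M" using diag[OF jk(1)] diag[OF jk(2)] by simp
      qed
      then show ?thesis by (simp add: sigma2_con_def L_def[symmetric])
    qed
    have ct: "card {1..t} = t" "card {n - t + 1..n} = t" using mt0 mn tm by auto
    have R: "0 < sqrt (real t)" using t1 by simp
    have devb: "50 * (2 * u * M) * (sqrt (x0 * real t) + x0) \<le> 200 * u * M * x0 * sqrt (real t)"
    proof -
      have "x0 \<le> x0\<^sup>2" using x01 by (simp add: power2_eq_square)
      then have "sqrt x0 \<le> sqrt (x0\<^sup>2)" by (rule real_sqrt_le_mono)
      also have "sqrt (x0\<^sup>2) = x0" using x01 by (simp only: real_sqrt_abs abs_of_nonneg)
      finally have "sqrt x0 \<le> x0" .
      then have "sqrt (x0 * real t) \<le> x0 * sqrt (real t)" by (simp add: real_sqrt_mult mult_right_mono)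
      moreover have "x0 \<le> x0 * sqrt (real t)" using x01 t1 by simp
      ultimately have "sqrt (x0 * real t) + x0 \<le> 2 * (x0 * sqrt (real t))" by simp
      then show ?thesis using u M0 by (simp add: mult_left_mono)
    qed
    have ES1: "(\<Sum>i\<in>{1..t}. (\<integral>Y. (inner_p p v (Y i))\<^sup>2 \<partial>P)) = real t * a1"
    proof -
      have "(\<Sum>i\<in>{1..t}. (\<integral>Y. (inner_p p v (Y i))\<^sup>2 \<partial>P)) = (\<Sum>i\<in>{1..t}. a1)"
        by (intro sum.cong refl) (use Ev tm mt0 mn in auto)
      then show ?thesis using ct by simp
    qed
    have ES2: "(\<Sum>i\<in>{n - t + 1..n}. (\<integral>Y. (inner_p p v (Y i))\<^sup>2 \<partial>P)) = real t * a2"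
    proof -
      have "(\<Sum>i\<in>{n - t + 1..n}. (\<integral>Y. (inner_p p v (Y i))\<^sup>2 \<partial>P)) = (\<Sum>i\<in>{n - t + 1..n}. a2)"
        by (intro sum.cong refl) (use Ev tm mt0 mn in auto)
      then show ?thesis using ct by simp
    qed
    define S1 where "S1 = (\<Sum>i\<in>{1..t}. (inner_p p v (X i))\<^sup>2)"
    define S2 where "S2 = (\<Sum>i\<in>{n - t + 1..n}. (inner_p p v (X i))\<^sup>2)"
    have dev1: "\<bar>S1 - real t * a1\<bar> < 200 * u * M * x0 * sqrt (real t)"
    proof -
      have "\<bar>S1 - real t * a1\<bar> < 50 * (2 * u * M) * (sqrt (x0 * real t) + x0)"
        using XQ1 X(1) ct ES1 by (simp add: BQ1_def S1_def sum_subtractf not_le)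
      then show ?thesis by (rule less_le_trans[OF _ devb])
    qed
    have dev2: "\<bar>S2 - real t * a2\<bar> < 200 * u * M * x0 * sqrt (real t)"
    proof -
      have "\<bar>S2 - real t * a2\<bar> < 50 * (2 * u * M) * (sqrt (x0 * real t) + x0)"
        using XQ2 X(1) ct ES2 by (simp add: BQ2_def S2_def sum_subtractf not_le)
      then show ?thesis by (rule less_le_trans[OF _ devb])
    qed
    let ?A = "\<lambda>j k. Sigma_hat_1 X t j k - Sigma_hat_2 n X t j k"
    have qA: "quad_form p ?A v = (S1 - S2) / real t"
    proof -
      have "quad_form p ?A v = quad_form p (Sigma_hat_1 X t) v - quad_form p (Sigma_hat_2 n X t) v"
        by (rule quad_form_diff)
      also have "\<dots> = (1 / real t) * S1 - (1 / real t) * (\<Sum>i\<in>{1..t}. (inner_p p v (X (n - i + 1)))\<^sup>2)"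
        by (simp add: quad_Sigma_hat_1 quad_Sigma_hat_2 S1_def)
      also have "(\<Sum>i\<in>{1..t}. (inner_p p v (X (n - i + 1)))\<^sup>2) = S2"
        unfolding S2_def by (rule sum_rev_index) (use tm mn in auto)
      finally show ?thesis by (simp add: diff_divide_distrib)
    qed
    have tpos: "0 < real t" using t1 by simp
    have sqt: "sqrt (real t) * sqrt (real t) = real t" by simp
    have qlow: "D / 2 - 400 * u * M * x0 / sqrt (real t) < \<bar>quad_form p ?A v\<bar>"
    proof -
      have "real t * (D / 2) < real t * \<bar>a1 - a2\<bar>" using a12 tpos by simp
      also have "\<dots> = \<bar>real t * (a1 - a2)\<bar>" using tpos by (simp add: abs_mult)
      also have "\<dots> = \<bar>real t * a1 - real t * a2\<bar>" by (simp only: right_diff_distrib)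
      also have "\<dots> \<le> \<bar>S1 - S2\<bar> + \<bar>S1 - real t * a1\<bar> + \<bar>S2 - real t * a2\<bar>" by linarith
      finally have "real t * (D / 2) < \<bar>S1 - S2\<bar> + 400 * u * M * x0 * sqrt (real t)"
        using dev1 dev2 by linarith
      then have "real t * (D / 2) - 400 * u * M * x0 * sqrt (real t) < real t * \<bar>quad_form p ?A v\<bar>"
        using tpos by (simp add: qA abs_divide)
      moreover have "400 * u * M * x0 * sqrt (real t) = real t * (400 * u * M * x0 / sqrt (real t))"
        using R sqt by (simp add: field_simps)
      ultimately have "real t * (D / 2 - 400 * u * M * x0 / sqrt (real t)) < real t * \<bar>quad_form p ?A v\<bar>"
        by (simp add: right_diff_distrib)
      then show ?thesis using tpos by simp
    qed
    have Shat: "\<bar>quad_form p ?A v\<bar> \<le> 4 * S_hat n p X t s'"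
      unfolding S_hat_def by (rule lam_hat_sparse_lower[OF p v s's2 s'1])
    have gt: "g / real t \<le> 1"
    proof -
      have "2 * g \<le> Cc * g" using Cc2 g1 by (intro mult_right_mono) auto
      also have "\<dots> \<le> real m" by (rule mCg)
      also have "\<dots> < 2 * real t" using mt by simp
      finally show ?thesis using tpos by simp
    qed
    have hmax: "max (sqrt (g / real t)) (g / real t) = sqrt (g / real t)"
    proof -
      have xx: "(g / real t) * (g / real t) \<le> (g / real t) * 1"
        by (rule mult_left_mono[OF gt]) (use g1 tpos in simp)
      have "g / real t \<le> sqrt (g / real t)" by (rule real_le_rsqrt) (use xx in \<open>simp add: power2_eq_square\<close>)
      then show ?thesis by simp
    qed
    have key: "100 * u * M * x0 / sqrt (real t) + lam * aU * M * real s * sqrt (g / real t) \<le> D / 8"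
    proof (rule key_ineq[OF M0 D0 _ g1 tpos _ _ refl])
      show "1 \<le> real s" using s1 by simp
      show "real m < 2 * real t" using mt by simp
      show "0 < real m" using m1 by simp
      show "0 \<le> u" "0 \<le> x0" "0 \<le> lam" "0 \<le> aU" using u x01 lam aU0 by auto
      show "(2 * (800 * u * x0 + 8 * lam * aU)\<^sup>2 + 2) * (real s)\<^sup>2 * g \<le> real m * (D / M)\<^sup>2"
        using hyp' Cc by simp
    qed
    have thr: "lam * sigma2_con n p X * h_fun p n s' t \<le> lam * aU * M * real s * sqrt (g / real t)"
    proof -
      have h: "h_fun p n s' t = real s' * sqrt (g / real t)" using hmax by (simp add: h_fun_def g_def)
      have "lam * sigma2_con n p X \<le> lam * (aU * M)" using sigU lam by (intro mult_left_mono)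
      moreover have "0 \<le> real s' * sqrt (g / real t)" using g1 tpos by simp
      ultimately have "lam * sigma2_con n p X * (real s' * sqrt (g / real t)) \<le> lam * (aU * M) * (real s' * sqrt (g / real t))"
        by (intro mult_right_mono)
      also have "\<dots> \<le> lam * (aU * M) * (real s * sqrt (g / real t))"
        using s's lam aU0 M0 g1 tpos by (intro mult_left_mono mult_right_mono) auto
      finally show ?thesis unfolding h by (simp add: mult_ac)
    qed
    have "lam * sigma2_con n p X * h_fun p n s' t < S_hat n p X t s'"
      using thr key qlow Shat by linarith
    then show ?thesis unfolding psi_adaptive_def using tT s'S by auto
  qed
  have "(\<integral>X. 1 - psi_adaptive n p lam X \<partial>P) \<le> measure P Bad"
  proof (rule integral_le_prob[OF prob_space_axioms Badm])
    fix X assume "X \<in> space P"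
    then show "0 \<le> 1 - psi_adaptive n p lam X \<and> 1 - psi_adaptive n p lam X \<le> indicator Bad X"
      using rej[of X] by (cases "X \<in> Bad") (auto simp: psi_adaptive_def)
  qed
  then show ?thesis using mBad by simp
qed

theorem proposition6:
  fixes \<delta> w u :: real
  assumes "0 < \<delta>" and "\<delta> < 1" and "0 < w" and "0 < u"
  shows "\<exists>lam0 > 0. \<forall>lam \<ge> lam0. \<exists>C > 0. \<forall>(n::nat) (p::nat) (t0::nat) \<Sigma>1 \<Sigma>2 P0 P1.
     real n \<ge> ln (exp 1 * real p) \<longrightarrow>
     null_model n p w u P0 \<longrightarrow>
     alt_model n p w u t0 \<Sigma>1 \<Sigma>2 P1 \<longrightarrow>
     (\<exists>s\<in>{1..p}. real (min t0 (n - t0)) *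
         (lam_max_s p s (\<lambda>j k. \<Sigma>1 j k - \<Sigma>2 j k) /
          max (lam_max_s p s \<Sigma>1) (lam_max_s p s \<Sigma>2))\<^sup>2
        \<ge> C * (real s)\<^sup>2 * g_fun p n) \<longrightarrow>
     (\<integral>X. psi_adaptive n p lam X \<partial>P0) + (\<integral>X. 1 - psi_adaptive n p lam X \<partial>P1) \<le> \<delta>"
proof (rule exI[of _ "lamN \<delta> w u"], intro conjI allI impI)
  show "0 < lamN \<delta> w u" using consts_pos[OF assms] by simp
next
  fix lam :: real assume lam: "lamN \<delta> w u \<le> lam"
  have lam0: "0 \<le> lam" using lam consts_pos[OF assms] by simp
  show "\<exists>C>0. \<forall>(n::nat) (p::nat) (t0::nat) \<Sigma>1 \<Sigma>2 P0 P1.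
     real n \<ge> ln (exp 1 * real p) \<longrightarrow>
     null_model n p w u P0 \<longrightarrow>
     alt_model n p w u t0 \<Sigma>1 \<Sigma>2 P1 \<longrightarrow>
     (\<exists>s\<in>{1..p}. real (min t0 (n - t0)) *
         (lam_max_s p s (\<lambda>j k. \<Sigma>1 j k - \<Sigma>2 j k) /
          max (lam_max_s p s \<Sigma>1) (lam_max_s p s \<Sigma>2))\<^sup>2
        \<ge> C * (real s)\<^sup>2 * g_fun p n) \<longrightarrow>
     (\<integral>X. psi_adaptive n p lam X \<partial>P0) + (\<integral>X. 1 - psi_adaptive n p lam X \<partial>P1) \<le> \<delta>"
  proof (rule exI[of _ "Calt \<delta> u lam"], intro conjI allI impI)
    show "0 < Calt \<delta> u lam" by (simp add: Calt_def add_nonneg_pos)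
  next
    fix n p t0 :: nat and \<Sigma>1 \<Sigma>2 :: mat and P0 P1 :: "data measure"
    assume nL: "ln (exp 1 * real p) \<le> real n" and N: "null_model n p w u P0"
      and Alt: "alt_model n p w u t0 \<Sigma>1 \<Sigma>2 P1"
      and H: "\<exists>s\<in>{1..p}. real (min t0 (n - t0)) *
         (lam_max_s p s (\<lambda>j k. \<Sigma>1 j k - \<Sigma>2 j k) /
          max (lam_max_s p s \<Sigma>1) (lam_max_s p s \<Sigma>2))\<^sup>2
        \<ge> Calt \<delta> u lam * (real s)\<^sup>2 * g_fun p n"
    obtain s where s: "s \<in> {1..p}" and hs: "real (min t0 (n - t0)) *
         (lam_max_s p s (\<lambda>j k. \<Sigma>1 j k - \<Sigma>2 j k) /
          max (lam_max_s p s \<Sigma>1) (lam_max_s p s \<Sigma>2))\<^sup>2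
        \<ge> Calt \<delta> u lam * (real s)\<^sup>2 * g_fun p n" using H by blast
    have p: "1 \<le> p" using s by auto
    have n: "2 \<le> n" using Alt by (auto simp: alt_model_def)
    have "(\<integral>X. psi_adaptive n p lam X \<partial>P0) \<le> \<delta> / 4"
      by (rule null_bound[OF N p n nL assms lam])
    moreover have "(\<integral>X. 1 - psi_adaptive n p lam X \<partial>P1) \<le> 3 * \<delta> / 32"
      by (rule alt_bound[OF Alt p nL assms lam0 s hs])
    ultimately show "(\<integral>X. psi_adaptive n p lam X \<partial>P0) + (\<integral>X. 1 - psi_adaptive n p lam X \<partial>P1) \<le> \<delta>"
      using assms by simp
  qed
qed

end
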